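(* Let $r,s\ge0$, $\Delta=(v(y_1),\dots,v(y_n))$, $F\subset\{1,\dots,n\}$ with $r+2s+|F|=|\Delta|-1$, and let $\mathcal{P}$ be a collection of conditions in general position for $\mathrm{ev}_F$ on the closure $\mathcal{M}^{desc}_{(r,s)}(\Delta)$ of refined descendant curves and on $\mathcal{M}^{rB}_{(r,s)}(\Delta,F)$. Then $$N^{desc}_{(r,s)}(y,\Delta,F,\mathcal{P})=N^{rB}_{(r,s)}(y,\Delta,F,\mathcal{P}).$$
   Context: Curves. An $(r,s)$-marked curve of degree $\Delta$ is $C=(\Gamma,h,x_1,\dots,x_{r+s})$ with $\Gamma$ a metric graph whose components are trees, $h:\Gamma\to\mathbb{R}^2$ continuous, affine with integral direction vectors on edges, balanced at vertices; $x_1,\dots,x_r$ (real) and $x_{r+1},\dots,x_{r+s}$ (complex) are contracted unbounded edges (markings), the other unbounded edges $y_1,\dots,y_n$ (labeled ends) have outward direction vectors $\Delta=(v(y_1),\dots,v(y_n))$. Weight $w(e)$ = gcd of coordinates of direction vector. Mikhalkin multiplicity of a vertex with exactly three non-contracted edges of direction vectors $u,v,w$: $a=|\det(u,v)|$. $\mathcal{M}_{(r,s)}(\Delta)$ is the polyhedral complex of connected such curves. An oriented curve carries orientations of non-contracted edges; $F=\{i: y_i\text{ inward}\}$ (fixed ends); $\mathcal{M}^{or}_{(r,s)}(\Delta,F)$ the connected oriented curves with fixed ends $F$. $\mathrm{ev}_F(C)=(h(x_1),\dots,h(x_{r+s}),(h(y_i))_{i\in F})$; general position for $\mathrm{ev}_F$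 on a subcomplex $M$ means avoiding images of cells of $M$ whose image has dimension $<2(r+s)+|F|$. $G(\Delta,F)$: permutations of $\{1,\dots,n\}$ fixing $F$ pointwise and preserving $v(y_i)$. Oriented refined broccoli curve: vertices of types (I) real marking, two outgoing non-contracted edges, $m_V(y)=1$; (II) unmarked 3-valent, two in one out, $m_V(y)=\frac{y^{a/2}-y^{-a/2}}{y^{1/2}-y^{-1/2}}$; (III) complex marking, three outgoing non-contracted edges, $m_V(y)=\frac{y^{a/2}+y^{-a/2}}{y^{1/2}+y^{-1/2}}$. Unoriented refined broccoli curve: vertices of types (I') 3-valent with real marking, $m_V(y)=1$; (II') 3-valent unmarked, $m_V(y)=\frac{y^{a/2}-y^{-a/2}}{y^{1/2}-y^{-1/2}}$; (III') 4-valent with complex marking, $m_V(y)=\frac{y^{a/2}+y^{-a/2}}{y^{1/2}+y^{-1/2}}$. End factors: $m_{y_i}(y)=\frac{y^{w(y_i)/2}+(-1)^{w(y_i)}y^{-w(y_i)/2}}{y^{1/2}+(-1)^{w(y_i)}y^{-1/2}}$ for $i\in F$ and $m_{y_i}(y)=\frac{y^{w(y_i)/2}-(-1)^{w(y_i)}y^{-w(y_i)/2}}{w(y_i)(y^{1/2}-(-1)^{w(y_i)}y^{-1/2})}$ for $i\notin F$; $m_C(y)=\prod_i m_{y_i}(y)\prod_V m_V(y)$. $\mathcal{M}^{rB}_{(r,s)}(\Delta,F)$ is the closure of oriented refined broccoli curves in $\mathcal{M}^{or}_{(r,s)}(\Delta,F)$ and $N^{rB}_{(r,s)}(y,\Delta,F,\mathcal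 P)=\frac{1}{|G(\Delta,F)|}\sum m_C(y)$ over oriented refined broccoli curves $C$ with $\mathrm{ev}_F(C)=\mathcal P$. Refined descendant curve: a curve in $\mathcal{M}_{(r,s)}(\Delta)$ whose real markings are each adjacent to a 3-valent vertex of $\Gamma$ and whose complex markings are each adjacent to a 4-valent vertex of $\Gamma$. For $\mathcal{P}$ in general position, the refined descendant curves through $\mathcal{P}$ are exactly the unoriented refined broccoli curves through $\mathcal{P}$. $N^{desc}_{(r,s)}(y,\Delta,F,\mathcal{P})=\frac{1}{|G(\Delta,F)|}\sum_C m_C(y)$, summing over refined descendant curves $C$ with $\mathrm{ev}_F(C)=\mathcal P$, where $m_C(y)$ is the multiplicity of $C$ as an unoriented refined broccoli curve (with respect to $F$). *)

theory Defs
  imports "HOL-Analysis.Analysis" "HOL-Combinatorics.Permutations"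
begin

section \<open>Tropical (r,s)-marked curves, encoded by splits (leaf-labelled trees)\<close>

text \<open>Leaves of the abstract tree: markings x_1..x_{r+s} are Mk 0 .. Mk (r+s-1)
  (Mk i real iff i < r, complex iff r <= i < r+s); ends y_1..y_n are En 0 .. En (n-1),
  with outward direction vector Delta ! i.  The end En 0 is used as a reference leaf.\<close>

datatype leaf = Mk nat | En nat

type_synonym ivec = "int \<times> int"
type_synonym pt = "real \<times> real"

definition leaves :: "nat \<Rightarrow> nat \<Rightarrow> nat \<Rightarrow> leaf set" where
  "leaves r s n = Mk ` {..<r+s} \<union> En ` {..<n}"

definition refl_leaf :: leaf where "refl_leaf = En 0"

text \<open>Side of the reference end edge not containing the reference leaf (the root vertex).\<close>
definition root :: "nat \<Rightarrow> nat \<Rightarrow> nat \<Rightarrow> leaf set" where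
  "root r s n = leaves r s n - {refl_leaf}"

definition vdir :: "ivec list \<Rightarrow> leaf \<Rightarrow> ivec" where
  "vdir D l = (case l of Mk i \<Rightarrow> (0,0) | En i \<Rightarrow> D ! i)"

text \<open>sigma A = sum of outward directions of the leaves in A = direction vector of the edge
  with lower side A, oriented away from the reference leaf.\<close>
definition sigma :: "ivec list \<Rightarrow> leaf set \<Rightarrow> ivec" where
  "sigma D A = ((\<Sum>l\<in>A. fst (vdir D l)), (\<Sum>l\<in>A. snd (vdir D l)))"

definition idet :: "ivec \<Rightarrow> ivec \<Rightarrow> int" where
  "idet u v = fst u * snd v - snd u * fst v"

definition wt :: "ivec \<Rightarrow> nat" where
  "wt v = nat (gcd (fst v) (snd v))"

definition is_split :: "nat \<Rightarrow> nat \<Rightarrow> nat \<Rightarrow> leaf set \<Rightarrow> bool" where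
  "is_split r s n A \<longleftrightarrow> A \<subseteq> root r s n \<and> 2 \<le> card A \<and> card A + 2 \<le> card (leaves r s n)"

text \<open>A curve is a pair (eta, b): eta assigns to each split (bounded edge, identified with its side
  not containing the reference leaf) its (signed) length, 0 if the split is not an edge; b is the
  position h of the root vertex.  For oriented curves the sign of eta on a non-contracted bounded
  edge encodes its orientation (positive = pointing away from the reference leaf).\<close>
type_synonym curve = "(leaf set \<Rightarrow> real) \<times> pt"

definition edgesS :: "curve \<Rightarrow> leaf set set" where
  "edgesS C = {A. fst C A \<noteq> 0}"

definition is_curve_data :: "nat \<Rightarrow> nat \<Rightarrow> ivec list \<Rightarrow> curve \<Rightarrow> bool" where
  "is_curve_data r s D C \<longleftrightarrow>
     (\<forall>v\<in>set D. v \<noteq> (0,0)) \<and> sigma D (leaves r s (length D)) = (0,0) \<and>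
     3 \<le> card (leaves r s (length D)) \<and>
     (\<forall>A\<in>edgesS C. is_split r s (length D) A) \<and>
     (\<forall>A\<in>edgesS C. \<forall>B\<in>edgesS C. A \<inter> B = {} \<or> A \<subseteq> B \<or> B \<subseteq> A)"

definition is_curve :: "nat \<Rightarrow> nat \<Rightarrow> ivec list \<Rightarrow> curve \<Rightarrow> bool" where
  "is_curve r s D C \<longleftrightarrow> is_curve_data r s D C \<and> (\<forall>A. fst C A \<ge> 0)"

text \<open>Elements of M^or_(r,s)(Delta,F): contracted bounded edges carry no orientation.\<close>
definition is_or_curve :: "nat \<Rightarrow> nat \<Rightarrow> ivec list \<Rightarrow> curve \<Rightarrow> bool" where
  "is_or_curve r s D C \<longleftrightarrow> is_curve_data r s D C \<and>
     (\<forall>A. sigma D A = (0,0) \<longrightarrow> fst C A \<ge> 0)"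

text \<open>Vertices: the root and one vertex below each bounded edge (the edge is its parent edge).\<close>
definition verts :: "nat \<Rightarrow> nat \<Rightarrow> nat \<Rightarrow> curve \<Rightarrow> leaf set set" where
  "verts r s n C = insert (root r s n) (edgesS C)"

text \<open>Child edges of vertex V (identified by their lower side).\<close>
definition children :: "curve \<Rightarrow> leaf set \<Rightarrow> leaf set set" where
  "children C V = {E \<in> edgesS C \<union> {{l} | l. l \<in> V}. E \<subset> V \<and>
      \<not> (\<exists>E'\<in>edgesS C. E \<subset> E' \<and> E' \<subset> V)}"

definition edges_at :: "curve \<Rightarrow> leaf set \<Rightarrow> leaf set set" where
  "edges_at C V = insert V (children C V)"

definition noncontr_at :: "ivec list \<Rightarrow> curve \<Rightarrow> leaf set \<Rightarrow> leaf set set" where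
  "noncontr_at D C V = {E \<in> edges_at C V. sigma D E \<noteq> (0,0)}"

definition has_real_mark :: "nat \<Rightarrow> curve \<Rightarrow> leaf set \<Rightarrow> bool" where
  "has_real_mark r C V \<longleftrightarrow> (\<exists>i<r. {Mk i} \<in> children C V)"

definition has_cplx_mark :: "nat \<Rightarrow> nat \<Rightarrow> curve \<Rightarrow> leaf set \<Rightarrow> bool" where
  "has_cplx_mark r s C V \<longleftrightarrow> (\<exists>i. r \<le> i \<and> i < r + s \<and> {Mk i} \<in> children C V)"

definition has_mark :: "curve \<Rightarrow> leaf set \<Rightarrow> bool" where
  "has_mark C V \<longleftrightarrow> (\<exists>i. {Mk i} \<in> children C V)"

text \<open>Mikhalkin multiplicity a = |det(u,v)| for two of the non-contracted edges at V.\<close>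
definition mik :: "ivec list \<Rightarrow> curve \<Rightarrow> leaf set \<Rightarrow> int" where
  "mik D C V = Max {\<bar>idet (sigma D E) (sigma D E')\<bar> | E E'.
       E \<in> noncontr_at D C V \<and> E' \<in> noncontr_at D C V}"

text \<open>Orientation: does the (non-contracted) edge E point towards the reference leaf?
  Ends En i (i > 0) point inward iff they point to the reference side; the reference end
  (edge with lower side root) is inward iff it points away.\<close>
definition up :: "nat \<Rightarrow> nat \<Rightarrow> ivec list \<Rightarrow> nat set \<Rightarrow> curve \<Rightarrow> leaf set \<Rightarrow> bool" where
  "up r s D F C E =
     (if E = root r s (length D) then 0 \<notin> F
      else if (\<exists>i. E = {En i}) then (\<exists>i\<in>F. E = {En i})
      else fst C E < 0)"

definition outgoing :: "nat \<Rightarrow> nat \<Rightarrow> ivec list \<Rightarrow> nat set \<Rightarrow> curve \<Rightarrow> leaf set \<Rightarrow> leaf set \<Rightarrow> bool" where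
  "outgoing r s D F C V E \<longleftrightarrow>
     (E = V \<and> up r s D F C E) \<or> (E \<in> children C V \<and> \<not> up r s D F C E)"

section \<open>Refined multiplicities (y real, y > 0, y ~= 1)\<close>

definition qminus :: "real \<Rightarrow> real \<Rightarrow> real" where
  "qminus a y = (y powr (a/2) - y powr (-a/2)) / (y powr (1/2) - y powr (-1/2))"

definition qplus :: "real \<Rightarrow> real \<Rightarrow> real" where
  "qplus a y = (y powr (a/2) + y powr (-a/2)) / (y powr (1/2) + y powr (-1/2))"

definition end_mult :: "ivec list \<Rightarrow> nat set \<Rightarrow> real \<Rightarrow> nat \<Rightarrow> real" where
  "end_mult D F y i = (let w = wt (D ! i) in
     if i \<in> F then
       (y powr (real w/2) + (-1)^w * y powr (- real w/2)) /
       (y powr (1/2) + (-1)^w * y powr (-1/2))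
     else
       (y powr (real w/2) - (-1)^w * y powr (- real w/2)) /
       (real w * (y powr (1/2) - (-1)^w * y powr (-1/2))))"

definition typeI :: "nat \<Rightarrow> nat \<Rightarrow> ivec list \<Rightarrow> nat set \<Rightarrow> curve \<Rightarrow> leaf set \<Rightarrow> bool" where
  "typeI r s D F C V \<longleftrightarrow> has_real_mark r C V \<and> card (edges_at C V) = 3 \<and>
     card (noncontr_at D C V) = 2 \<and> (\<forall>E\<in>noncontr_at D C V. outgoing r s D F C V E)"

definition typeII :: "nat \<Rightarrow> nat \<Rightarrow> ivec list \<Rightarrow> nat set \<Rightarrow> curve \<Rightarrow> leaf set \<Rightarrow> bool" where
  "typeII r s D F C V \<longleftrightarrow> \<not> has_mark C V \<and> card (edges_at C V) = 3 \<and>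
     card (noncontr_at D C V) = 3 \<and>
     card {E\<in>noncontr_at D C V. outgoing r s D F C V E} = 1"

definition typeIII :: "nat \<Rightarrow> nat \<Rightarrow> ivec list \<Rightarrow> nat set \<Rightarrow> curve \<Rightarrow> leaf set \<Rightarrow> bool" where
  "typeIII r s D F C V \<longleftrightarrow> has_cplx_mark r s C V \<and> card (edges_at C V) = 4 \<and>
     card (noncontr_at D C V) = 3 \<and> (\<forall>E\<in>noncontr_at D C V. outgoing r s D F C V E)"

definition is_rbroccoli :: "nat \<Rightarrow> nat \<Rightarrow> ivec list \<Rightarrow> nat set \<Rightarrow> curve \<Rightarrow> bool" where
  "is_rbroccoli r s D F C \<longleftrightarrow> is_or_curve r s D C \<and>
     (\<forall>V\<in>verts r s (length D) C. typeI r s D F C V \<or> typeII r s D F C V \<or> typeIII r s D F C V)"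

definition mV_or :: "nat \<Rightarrow> nat \<Rightarrow> ivec list \<Rightarrow> nat set \<Rightarrow> real \<Rightarrow> curve \<Rightarrow> leaf set \<Rightarrow> real" where
  "mV_or r s D F y C V =
     (if typeI r s D F C V then 1
      else if typeII r s D F C V then qminus (real_of_int (mik D C V)) y
      else if typeIII r s D F C V then qplus (real_of_int (mik D C V)) y
      else 0)"

definition mC_or :: "nat \<Rightarrow> nat \<Rightarrow> ivec list \<Rightarrow> nat set \<Rightarrow> real \<Rightarrow> curve \<Rightarrow> real" where
  "mC_or r s D F y C = (\<Prod>i<length D. end_mult D F y i) *
     (\<Prod>V\<in>verts r s (length D) C. mV_or r s D F y C V)"

text \<open>Unoriented refined broccoli vertex types (I'), (II'), (III') and multiplicity.
  (Vertices of no listed type get factor 0; for conditions in general position this never occurs.)\<close>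
definition mV_un :: "nat \<Rightarrow> nat \<Rightarrow> ivec list \<Rightarrow> real \<Rightarrow> curve \<Rightarrow> leaf set \<Rightarrow> real" where
  "mV_un r s D y C V =
     (if card (edges_at C V) = 3 \<and> has_real_mark r C V then 1
      else if card (edges_at C V) = 3 \<and> \<not> has_mark C V then qminus (real_of_int (mik D C V)) y
      else if card (edges_at C V) = 4 \<and> has_cplx_mark r s C V then qplus (real_of_int (mik D C V)) y
      else 0)"

definition mC_un :: "nat \<Rightarrow> nat \<Rightarrow> ivec list \<Rightarrow> nat set \<Rightarrow> real \<Rightarrow> curve \<Rightarrow> real" where
  "mC_un r s D F y C = (\<Prod>i<length D. end_mult D F y i) *
     (\<Prod>V\<in>verts r s (length D) C. mV_un r s D y C V)"

definition is_desc :: "nat \<Rightarrow> nat \<Rightarrow> ivec list \<Rightarrow> curve \<Rightarrow> bool" where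
  "is_desc r s D C \<longleftrightarrow> is_curve r s D C \<and>
     (\<forall>i<r. \<forall>V\<in>verts r s (length D) C. {Mk i} \<in> children C V \<longrightarrow> card (edges_at C V) = 3) \<and>
     (\<forall>i. r \<le> i \<and> i < r + s \<longrightarrow>
        (\<forall>V\<in>verts r s (length D) C. {Mk i} \<in> children C V \<longrightarrow> card (edges_at C V) = 4))"

text \<open>Position h of the vertex to which leaf l is attached.\<close>
definition pos :: "ivec list \<Rightarrow> curve \<Rightarrow> leaf \<Rightarrow> pt" where
  "pos D C l = (fst (snd C) + (\<Sum>A\<in>{A\<in>edgesS C. l \<in> A}. \<bar>fst C A\<bar> * real_of_int (fst (sigma D A))),
                snd (snd C) + (\<Sum>A\<in>{A\<in>edgesS C. l \<in> A}. \<bar>fst C A\<bar> * real_of_int (snd (sigma D A))))"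

text \<open>Coordinates of the target of ev_F: PX i, PY i are the coordinates of h(x_{i+1});
  for i in F, FL i is the coordinate det(v(y_i), h(y_i)) of the class of h(y_i) in R^2/<v(y_i)>.\<close>
datatype evidx = PX nat | PY nat | FL nat

definition ev :: "nat \<Rightarrow> nat \<Rightarrow> ivec list \<Rightarrow> nat set \<Rightarrow> curve \<Rightarrow> evidx \<Rightarrow> real" where
  "ev r s D F C j = (case j of
      PX i \<Rightarrow> if i < r + s then fst (pos D C (Mk i)) else 0
    | PY i \<Rightarrow> if i < r + s then snd (pos D C (Mk i)) else 0
    | FL i \<Rightarrow> if i \<in> F then
                real_of_int (fst (D ! i)) * snd (pos D C (En i))
                - real_of_int (snd (D ! i)) * fst (pos D C (En i))
              else 0)"

definition lin_indep_fn :: "(evidx \<Rightarrow> real) set \<Rightarrow> bool" where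
  "lin_indep_fn B \<longleftrightarrow> (\<forall>c. (\<forall>j. (\<Sum>b\<in>B. c b * b j) = 0) \<longrightarrow> (\<forall>b\<in>B. c b = 0))"

definition aff_dim_fn :: "(evidx \<Rightarrow> real) set \<Rightarrow> nat" where
  "aff_dim_fn X = (GREATEST k. \<exists>B. finite B \<and> card B = k \<and> lin_indep_fn B \<and>
       B \<subseteq> {(\<lambda>j. p j - q j) | p q. p \<in> X \<and> q \<in> X})"

text \<open>Cells of a subcomplex M (a union of cells): curves of the same combinatorial type
  (support and orientation of the bounded edges).\<close>
definition cells :: "curve set \<Rightarrow> curve set set" where
  "cells M = {{C'\<in>M. sgn \<circ> fst C' = sgn \<circ> fst C} | C. C \<in> M}"

definition gen_pos :: "nat \<Rightarrow> nat \<Rightarrow> ivec list \<Rightarrow> nat set \<Rightarrow> curve set \<Rightarrow> (evidx \<Rightarrow> real) \<Rightarrow> bool" where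
  "gen_pos r s D F M P \<longleftrightarrow>
     (\<forall>X\<in>cells M. aff_dim_fn (ev r s D F ` X) < 2 * (r + s) + card F \<longrightarrow> P \<notin> ev r s D F ` X)"

definition M_desc_closure :: "nat \<Rightarrow> nat \<Rightarrow> ivec list \<Rightarrow> curve set" where
  "M_desc_closure r s D = closure {C. is_desc r s D C}"

definition M_rB :: "nat \<Rightarrow> nat \<Rightarrow> ivec list \<Rightarrow> nat set \<Rightarrow> curve set" where
  "M_rB r s D F = closure {C. is_rbroccoli r s D F C}"

definition Gsym :: "ivec list \<Rightarrow> nat set \<Rightarrow> nat" where
  "Gsym D F = card {p. p permutes {..<length D} \<and> (\<forall>i\<in>F. p i = i) \<and>
                       (\<forall>i<length D. D ! (p i) = D ! i)}"

definition N_rB :: "nat \<Rightarrow> nat \<Rightarrow> real \<Rightarrow> ivec list \<Rightarrow> nat set \<Rightarrow> (evidx \<Rightarrow> real) \<Rightarrow> real" where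
  "N_rB r s y D F P = (1 / real (Gsym D F)) *
     (\<Sum>C\<in>{C. is_rbroccoli r s D F C \<and> ev r s D F C = P}. mC_or r s D F y C)"

definition N_desc :: "nat \<Rightarrow> nat \<Rightarrow> real \<Rightarrow> ivec list \<Rightarrow> nat set \<Rightarrow> (evidx \<Rightarrow> real) \<Rightarrow> real" where
  "N_desc r s y D F P = (1 / real (Gsym D F)) *
     (\<Sum>C\<in>{C. is_desc r s D C \<and> ev r s D F C = P}. mC_un r s D F y C)"

end

theory Submission
  imports Defs "HOL-Library.Function_Algebras"
begin


lemma card_leaves: "card (leaves r s n) = r + s + n" and finite_leaves: "finite (leaves r s n)"
proof -
  have "card (Mk ` {..<r+s} \<union> En ` {..<n}) = card (Mk ` {..<r+s}) + card (En ` {..<n})"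
    by (rule card_Un_disjoint) auto
  also have "\<dots> = r + s + n" by (simp add: card_image inj_on_def)
  finally show "card (leaves r s n) = r + s + n" unfolding leaves_def .
  show "finite (leaves r s n)" unfolding leaves_def by simp
qed

locale cur =
  fixes r s :: nat and D :: "ivec list" and C :: curve
  assumes cd: "is_curve_data r s D C" and npos: "1 \<le> length D"
begin

abbreviation "n \<equiv> length D"
abbreviation "Es \<equiv> edgesS C"
abbreviation "R \<equiv> root r s (length D)"
abbreviation "Lv \<equiv> leaves r s (length D)"
abbreviation "VS \<equiv> verts r s (length D) C"
abbreviation "ch \<equiv> children C"
definition "items = Es \<union> (\<lambda>l. {l}) ` R"

lemma En0: "En 0 \<in> Lv" using npos by (auto simp: leaves_def)
lemma R_def': "R = Lv - {En 0}" by (simp add: root_def refl_leaf_def)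
lemma finR: "finite R" by (simp add: R_def' finite_leaves)
lemma cardLv: "3 \<le> card Lv" using cd by (simp add: is_curve_data_def)
lemma cardR: "card R + 1 = card Lv"
proof -
  have "card R = card Lv - 1" unfolding R_def' by (rule card_Diff_singleton[OF En0])
  thus ?thesis using cardLv by linarith
qed
lemma cardR2: "2 \<le> card R" using cardLv cardR by simp
lemma R_sub: "R \<subseteq> Lv" by (auto simp: R_def')
lemma En0_notin_R: "En 0 \<notin> R" by (simp add: R_def')

lemma Es_split: "A \<in> Es \<Longrightarrow> is_split r s n A" using cd by (simp add: is_curve_data_def)
lemma Es_sub: "A \<in> Es \<Longrightarrow> A \<subseteq> R" using Es_split by (simp add: is_split_def)
lemma Es_card: "A \<in> Es \<Longrightarrow> 2 \<le> card A" using Es_split by (simp add: is_split_def)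
lemma Es_fin: "A \<in> Es \<Longrightarrow> finite A" using Es_sub finR finite_subset by blast
lemma Es_neR: "A \<in> Es \<Longrightarrow> A \<noteq> R" using Es_split cardR by (force simp: is_split_def)
lemma Es_psub: "A \<in> Es \<Longrightarrow> A \<subset> R" using Es_sub Es_neR by blast
lemma finEs: "finite Es"
proof -
  have "Es \<subseteq> Pow R" using Es_sub by blast
  thus ?thesis using finR finite_subset by blast
qed
lemma Es_lam: "A \<in> Es \<Longrightarrow> B \<in> Es \<Longrightarrow> A \<inter> B = {} \<or> A \<subseteq> B \<or> B \<subseteq> A"
  using cd by (simp add: is_curve_data_def)
lemma Es_ne1: "A \<in> Es \<Longrightarrow> A \<noteq> {l}" using Es_card by fastforce

lemma VS_def': "VS = insert R Es" by (simp add: verts_def)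
lemma VS_sub: "V \<in> VS \<Longrightarrow> V \<subseteq> R" using Es_sub by (auto simp: VS_def')
lemma VS_card: "V \<in> VS \<Longrightarrow> 2 \<le> card V" using Es_card cardR2 by (auto simp: VS_def')
lemma VS_fin: "V \<in> VS \<Longrightarrow> finite V" using VS_sub finR finite_subset by blast
lemma finVS: "finite VS" using finEs by (simp add: VS_def')
lemma cardVS: "card VS = card Es + 1"
proof -
  have "R \<notin> Es" using Es_neR by blast
  thus ?thesis using finEs by (simp add: VS_def')
qed

lemma items_lam: assumes "I \<in> items" "J \<in> items" shows "I \<inter> J = {} \<or> I \<subseteq> J \<or> J \<subseteq> I"
proof -
  { fix l A assume "A = {l}" have "A \<inter> B = {} \<or> A \<subseteq> B \<or> B \<subseteq> A" for B using `A = {l}` by blast }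
  note * = this
  show ?thesis
  proof (cases "I \<in> Es \<and> J \<in> Es")
    case True thus ?thesis using Es_lam by blast
  next
    case False
    hence "(\<exists>l. I = {l}) \<or> (\<exists>l. J = {l})" using assms unfolding items_def by blast
    thus ?thesis using * by blast
  qed
qed
lemma items_sub: "I \<in> items \<Longrightarrow> I \<subseteq> R" unfolding items_def using Es_sub by auto
lemma VS_items_lam: assumes "I \<in> insert R items" "J \<in> insert R items" shows "I \<inter> J = {} \<or> I \<subseteq> J \<or> J \<subseteq> I"
proof -
  have "I = R \<or> I \<in> items" "J = R \<or> J \<in> items" using assms by auto
  thus ?thesis using items_lam items_sub by blast
qed
lemma items_ne: "I \<in> items \<Longrightarrow> I \<noteq> {}" unfolding items_def using Es_card by fastforce
lemma items_neR: "I \<in> items \<Longrightarrow> I \<noteq> R" unfolding items_def using Es_neR cardR2 by fastforce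
lemma items_fin: "I \<in> items \<Longrightarrow> finite I" using items_sub finR finite_subset by blast
lemma fin_items: "finite items" unfolding items_def using finEs finR by simp
lemma VS_items: "VS \<subseteq> insert R items" by (auto simp: VS_def' items_def)

lemma ch_iff: "c \<in> ch V \<longleftrightarrow> (c \<in> Es \<or> (\<exists>l\<in>V. c = {l})) \<and> c \<subset> V \<and> \<not> (\<exists>E'\<in>Es. c \<subset> E' \<and> E' \<subset> V)"
  unfolding children_def by blast

lemma ch_items: "V \<in> VS \<Longrightarrow> c \<in> ch V \<Longrightarrow> c \<in> items"
  unfolding ch_iff items_def using VS_sub by blast
lemma ch_psub: "c \<in> ch V \<Longrightarrow> c \<subset> V" by (simp add: ch_iff)
lemma ch_fin: assumes "V \<in> VS" shows "finite (ch V)"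
proof -
  have "ch V \<subseteq> items" using ch_items assms by blast
  thus ?thesis using fin_items by (rule finite_subset)
qed

lemma ch_disj: assumes "V \<in> VS" "c1 \<in> ch V" "c2 \<in> ch V" "c1 \<noteq> c2" shows "c1 \<inter> c2 = {}"
proof -
  have i: "c1 \<in> items" "c2 \<in> items" using assms ch_items by auto
  { assume "c1 \<subset> c2"
    then have "c2 \<in> Es" using i items_ne by (auto simp: items_def)
    with `c1 \<subset> c2` assms(2,3) have False by (auto simp: ch_iff) }
  moreover
  { assume "c2 \<subset> c1"
    then have "c1 \<in> Es" using i items_ne by (auto simp: items_def)
    with `c2 \<subset> c1` assms(2,3) have False by (auto simp: ch_iff) }
  ultimately show ?thesis using items_lam[OF i] assms(4) by blast
qed

lemma sub_child: assumes "V \<in> VS" "I \<in> items" "I \<subset> V" shows "\<exists>c\<in>ch V. I \<subseteq> c"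
proof -
  let ?S = "{A. A \<in> insert I Es \<and> I \<subseteq> A \<and> A \<subset> V}"
  have fin: "finite ?S" using finEs by (auto intro: finite_subset[of _ "insert I Es"])
  have "I \<in> ?S" using assms by auto
  from finite_has_maximal2[OF fin this] obtain M where M: "M \<in> ?S" "\<forall>b\<in>?S. M \<le> b \<longrightarrow> M = b" by blast
  have "M \<in> ch V"
  proof -
    have "M \<in> Es \<or> (\<exists>l\<in>V. M = {l})"
      using M(1) assms(2,3) unfolding items_def by auto
    moreover have "\<not> (\<exists>E'\<in>Es. M \<subset> E' \<and> E' \<subset> V)"
    proof
      assume "\<exists>E'\<in>Es. M \<subset> E' \<and> E' \<subset> V"
      then obtain E' where "E' \<in> Es" "M \<subset> E'" "E' \<subset> V" by blast
      hence "E' \<in> ?S" using M(1) by auto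
      with M(2) `M \<subset> E'` show False by blast
    qed
    ultimately show ?thesis using M(1) by (auto simp: ch_iff)
  qed
  thus ?thesis using M(1) by blast
qed

lemma ch_cover: assumes "V \<in> VS" shows "\<Union>(ch V) = V"
proof
  show "\<Union>(ch V) \<subseteq> V" using ch_psub by blast
  show "V \<subseteq> \<Union>(ch V)"
  proof
    fix l assume "l \<in> V"
    moreover have "V \<noteq> {l}" using VS_card[OF assms] by auto
    ultimately have "{l} \<in> items" "{l} \<subset> V" using VS_sub[OF assms] unfolding items_def
      by auto
    from sub_child[OF assms this] show "l \<in> \<Union>(ch V)" by blast
  qed
qed

lemma ch_card2: assumes "V \<in> VS" shows "2 \<le> card (ch V)"
proof (rule ccontr)
  assume "\<not> 2 \<le> card (ch V)"
  hence "card (ch V) = 0 \<or> card (ch V) = 1" by arith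
  moreover have "card (ch V) \<noteq> 0" using ch_cover[OF assms] ch_fin[OF assms] VS_card[OF assms] by auto
  moreover { assume "card (ch V) = 1"
    then obtain c where "ch V = {c}" by (auto simp: card_Suc_eq)
    with ch_cover[OF assms] ch_psub[of c V] have False by auto }
  ultimately show False by blast
qed

lemma par: assumes "I \<in> items" shows "\<exists>!V. V \<in> VS \<and> I \<in> ch V"
proof -
  let ?S = "{A \<in> VS. I \<subset> A}"
  have fin: "finite ?S" using finVS by simp
  have "R \<in> VS" by (simp add: VS_def')
  moreover have "I \<subset> R" using items_sub[OF assms] items_neR[OF assms] by blast
  ultimately have "R \<in> ?S" by blast
  from finite_has_minimal2[OF fin this] obtain M where M: "M \<in> ?S" "\<forall>b\<in>?S. b \<le> M \<longrightarrow> M = b" by blast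
  have MVS: "M \<in> VS" and IM: "I \<subset> M" using M(1) by auto
  have Mch: "I \<in> ch M"
  proof -
    have "I \<in> Es \<or> (\<exists>l\<in>M. I = {l})" using assms IM unfolding items_def by blast
    moreover have "\<not> (\<exists>E'\<in>Es. I \<subset> E' \<and> E' \<subset> M)"
    proof
      assume "\<exists>E'\<in>Es. I \<subset> E' \<and> E' \<subset> M"
      then obtain E' where E': "E' \<in> Es" "I \<subset> E'" "E' \<subset> M" by blast
      have "E' \<in> VS" using E'(1) by (simp add: VS_def')
      hence "E' \<in> ?S" using E'(2) by blast
      with M(2) E'(3) show False by blast
    qed
    ultimately show ?thesis using IM unfolding ch_iff by blast
  qed
  have uniq: "V = M" if V: "V \<in> VS" "I \<in> ch V" for V
  proof -
    have IV: "I \<subset> V" using V(2) by (rule ch_psub)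
    have "V \<inter> M \<noteq> {}" using IV IM items_ne[OF assms] by blast
    moreover have "V \<in> insert R items" "M \<in> insert R items" using VS_items V(1) MVS by blast+
    ultimately have "V \<subseteq> M \<or> M \<subseteq> V" using VS_items_lam by blast
    moreover { assume "V \<subset> M"
      hence "V \<noteq> R" using VS_sub[OF MVS] by blast
      hence "V \<in> Es" using V(1) by (simp add: VS_def')
      with `V \<subset> M` IV Mch have False unfolding ch_iff by blast }
    moreover { assume "M \<subset> V"
      hence "M \<noteq> R" using VS_sub[OF V(1)] by blast
      hence "M \<in> Es" using MVS by (simp add: VS_def')
      with `M \<subset> V` IM V(2) have False unfolding ch_iff by blast }
    ultimately show ?thesis by blast
  qed
  show ?thesis using MVS Mch uniq by blast
qed

lemma child_rel: assumes "V \<in> VS" "c \<in> ch V" "A \<in> Es" shows "A \<subseteq> c \<or> V \<subseteq> A \<or> A \<inter> c = {}"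
proof -
  have ci: "c \<in> items" using assms ch_items by blast
  have Ai: "A \<in> items" using assms by (simp add: items_def)
  { assume "c \<subset> A"
    have "A \<inter> V \<noteq> {}" using `c \<subset> A` ch_psub[OF assms(2)] items_ne[OF ci] by blast
    hence "A \<subseteq> V \<or> V \<subseteq> A" using VS_items_lam[of A V] Ai VS_items assms(1) by blast
    moreover { assume "A \<subset> V" with `c \<subset> A` assms have False by (auto simp: ch_iff) }
    ultimately have "V \<subseteq> A" by blast }
  thus ?thesis using items_lam[OF Ai ci] by blast
qed

lemma ch_disj_VS: assumes "V \<in> VS" "W \<in> VS" "V \<noteq> W" shows "ch V \<inter> ch W = {}"
  using par assms ch_items by blast

lemma items_UN: "(\<Union>V\<in>VS. ch V) = items"
  using par ch_items by blast

lemma telescope: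
  fixes \<phi> :: "leaf set \<Rightarrow> 'a::comm_monoid_add"
  shows "(\<Sum>V\<in>VS. \<Sum>c\<in>ch V. \<phi> c) = (\<Sum>A\<in>Es. \<phi> A) + (\<Sum>l\<in>R. \<phi> {l})"
proof -
  have "(\<Sum>V\<in>VS. \<Sum>c\<in>ch V. \<phi> c) = sum \<phi> (\<Union>V\<in>VS. ch V)"
    by (rule sum.UNION_disjoint[symmetric]) (auto simp: finVS ch_fin dest: ch_disj_VS)
  also have "\<dots> = sum \<phi> (Es \<union> (\<lambda>l. {l}) ` R)" by (simp add: items_UN items_def)
  also have "\<dots> = sum \<phi> Es + sum \<phi> ((\<lambda>l. {l}) ` R)"
    by (rule sum.union_disjoint) (auto simp: finEs finR dest: Es_ne1)
  also have "sum \<phi> ((\<lambda>l. {l}) ` R) = (\<Sum>l\<in>R. \<phi> {l})" by (simp add: sum.reindex)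
  finally show ?thesis .
qed


definition sr :: "leaf set \<Rightarrow> real \<times> real" where
  "sr A = (real_of_int (fst (sigma D A)), real_of_int (snd (sigma D A)))"

lemma sigma_union: "finite A \<Longrightarrow> finite B \<Longrightarrow> A \<inter> B = {} \<Longrightarrow> sigma D (A \<union> B) = (fst (sigma D A) + fst (sigma D B), snd (sigma D A) + snd (sigma D B))"
  by (simp add: sigma_def sum.union_disjoint)

lemma sr_ch: assumes "V \<in> VS" shows "sr V = (\<Sum>c\<in>ch V. sr c)"
proof -
  have fc: "\<And>c. c \<in> ch V \<Longrightarrow> finite c" using ch_items[OF assms] items_fin by blast
  have dj: "\<forall>A\<in>ch V. \<forall>B\<in>ch V. A \<noteq> B \<longrightarrow> A \<inter> B = {}" using ch_disj[OF assms] by blast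
  have "(\<Sum>l\<in>V. f l) = (\<Sum>c\<in>ch V. \<Sum>l\<in>c. f l)" for f :: "leaf \<Rightarrow> int"
    using sum.UNION_disjoint[OF ch_fin[OF assms] _ dj, of f] fc ch_cover[OF assms] by simp
  thus ?thesis unfolding sr_def sigma_def by (simp add: sum_prod)
qed

lemma sigma_En: "sigma D {En i} = D ! i" by (simp add: sigma_def vdir_def)
lemma sigma_Mk: "sigma D {Mk m} = (0,0)" by (simp add: sigma_def vdir_def)
lemma D_nz: "i < n \<Longrightarrow> D ! i \<noteq> (0,0)" using cd by (auto simp: is_curve_data_def)
lemma sigma_Lv: "sigma D Lv = (0,0)" using cd by (simp add: is_curve_data_def)
lemma sigma_R: "sigma D R = (- fst (D!0), - snd (D!0))"
proof -
  have "Lv = R \<union> {En 0}" using En0 by (auto simp: R_def')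
  hence "sigma D Lv = (fst (sigma D R) + fst (D!0), snd (sigma D R) + snd (D!0))"
    using sigma_union[of R "{En 0}"] finR En0_notin_R sigma_En by simp
  hence "fst (sigma D R) = - fst (D!0)" "snd (sigma D R) = - snd (D!0)" using sigma_Lv by simp_all
  thus ?thesis by (simp add: prod_eq_iff)
qed
lemma sigma_R_nz: "sigma D R \<noteq> (0,0)"
proof -
  have "0 < n" using npos by linarith
  hence "D!0 \<noteq> (0,0)" using D_nz by blast
  thus ?thesis using sigma_R by (cases "D!0") auto
qed

definition isMk :: "leaf set \<Rightarrow> bool" where "isMk I \<longleftrightarrow> (\<exists>m. I = {Mk m})"
definition isCMk :: "leaf set \<Rightarrow> bool" where "isCMk I \<longleftrightarrow> (\<exists>m. r \<le> m \<and> m < r + s \<and> I = {Mk m})"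
definition mcnt :: "leaf set \<Rightarrow> nat" where "mcnt V = card {c\<in>ch V. isMk c}"
definition cmcnt :: "leaf set \<Rightarrow> nat" where "cmcnt V = card {c\<in>ch V. isCMk c}"

lemma has_mark_iff: "has_mark C V \<longleftrightarrow> (\<exists>c\<in>ch V. isMk c)" by (auto simp: has_mark_def isMk_def)
lemma has_cplx_iff: "has_cplx_mark r s C V \<longleftrightarrow> (\<exists>c\<in>ch V. isCMk c)" by (auto simp: has_cplx_mark_def isCMk_def)
lemma has_real_iff: "has_real_mark r C V \<longleftrightarrow> (\<exists>m<r. {Mk m} \<in> ch V)" by (auto simp: has_real_mark_def)

lemma sum_ind: assumes "finite A" shows "(\<Sum>x\<in>A. if P x then (1::int) else 0) = int (card {x\<in>A. P x})"
proof -
  have "{x\<in>A. P x} = A \<inter> Collect P" by blast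
  thus ?thesis using assms by (simp add: sum.If_cases)
qed

lemma R_Mk: "{l\<in>R. isMk {l}} = Mk ` {..<r+s}"
  by (auto simp: R_def' leaves_def isMk_def)
lemma R_CMk: "{l\<in>R. isCMk {l}} = Mk ` {r..<r+s}"
  by (auto simp: R_def' leaves_def isCMk_def)

lemma Es_notMk: "A \<in> Es \<Longrightarrow> \<not> isMk A" using Es_ne1 by (auto simp: isMk_def)
lemma Es_notCMk: "A \<in> Es \<Longrightarrow> \<not> isCMk A" using Es_ne1 by (auto simp: isCMk_def)

lemma sum_card_ch: "(\<Sum>V\<in>VS. int (card (ch V))) = int (card Es) + int (card R)"
  using telescope[of "\<lambda>_. (1::int)"] by simp

lemma sum_mcnt: "(\<Sum>V\<in>VS. int (mcnt V)) = int (r + s)"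
proof -
  have "(\<Sum>V\<in>VS. int (mcnt V)) = (\<Sum>V\<in>VS. \<Sum>c\<in>ch V. if isMk c then (1::int) else 0)"
    by (rule sum.cong) (auto simp: mcnt_def sum_ind ch_fin)
  also have "\<dots> = (\<Sum>A\<in>Es. if isMk A then (1::int) else 0) + (\<Sum>l\<in>R. if isMk {l} then 1 else 0)"
    by (rule telescope)
  also have "(\<Sum>A\<in>Es. if isMk A then (1::int) else 0) = 0" using Es_notMk by simp
  also have "(\<Sum>l\<in>R. if isMk {l} then (1::int) else 0) = int (r + s)"
    using sum_ind[OF finR, of "\<lambda>l. isMk {l}"] by (simp add: R_Mk card_image inj_on_def)
  finally show ?thesis by simp
qed

lemma sum_cmcnt: "(\<Sum>V\<in>VS. int (cmcnt V)) = int s"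
proof -
  have "(\<Sum>V\<in>VS. int (cmcnt V)) = (\<Sum>V\<in>VS. \<Sum>c\<in>ch V. if isCMk c then (1::int) else 0)"
    by (rule sum.cong) (auto simp: cmcnt_def sum_ind ch_fin)
  also have "\<dots> = (\<Sum>A\<in>Es. if isCMk A then (1::int) else 0) + (\<Sum>l\<in>R. if isCMk {l} then 1 else 0)"
    by (rule telescope)
  also have "(\<Sum>A\<in>Es. if isCMk A then (1::int) else 0) = 0" using Es_notCMk by simp
  also have "(\<Sum>l\<in>R. if isCMk {l} then (1::int) else 0) = int s"
    using sum_ind[OF finR, of "\<lambda>l. isCMk {l}"] by (simp add: R_CMk card_image inj_on_def)
  finally show ?thesis by simp
qed

lemma markA: assumes "V \<in> VS" "{Mk m} \<in> ch V" "A \<in> Es" shows "Mk m \<in> A \<longleftrightarrow> V \<subseteq> A"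
proof
  assume "V \<subseteq> A" thus "Mk m \<in> A" using ch_psub[OF assms(2)] by blast
next
  assume "Mk m \<in> A"
  have "\<not> A \<subseteq> {Mk m}" using Es_card[OF assms(3)] by (metis One_nat_def card.empty card.insert card_mono empty_iff finite.intros not_numeral_le_zero numeral_le_one_iff semiring_norm(69) subset_singletonD)
  thus "V \<subseteq> A" using child_rel[OF assms] `Mk m \<in> A` by blast
qed

end

locale curF = cur +
  fixes F :: "nat set"
  assumes Fsub: "F \<subseteq> {..<length D}"
begin

lemma finF: "finite F" using Fsub finite_subset by blast

definition freeI :: "leaf set \<Rightarrow> bool" where
  "freeI I \<longleftrightarrow> (\<exists>i. i \<notin> F \<and> En i \<in> I \<and> (\<forall>A\<in>Es. En i \<in> A \<and> A \<subseteq> I \<longrightarrow> \<not> has_mark C A))"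

definition rho :: "leaf set \<Rightarrow> int" where
  "rho I = (if isMk I then 0 else if I = R then (if 0 \<in> F then 0 else 1) else if freeI I then 0 else 1)"

lemma free_En: "freeI {En i} \<longleftrightarrow> i \<notin> F"
proof
  assume "freeI {En i}" thus "i \<notin> F" by (auto simp: freeI_def)
next
  assume "i \<notin> F"
  moreover have "\<forall>A\<in>Es. En i \<in> A \<and> A \<subseteq> {En i} \<longrightarrow> \<not> has_mark C A"
    using Es_ne1 subset_singletonD by fastforce
  ultimately show "freeI {En i}" by (auto simp: freeI_def)
qed

lemma free_Mk: "\<not> freeI {Mk m}" by (auto simp: freeI_def)

lemma free_rec: assumes "V \<in> Es" shows "freeI V \<longleftrightarrow> \<not> has_mark C V \<and> (\<exists>c\<in>ch V. freeI c)"
proof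
  have VV: "V \<in> VS" using assms by (simp add: VS_def')
  assume "freeI V"
  then obtain i where i: "i \<notin> F" "En i \<in> V" "\<forall>A\<in>Es. En i \<in> A \<and> A \<subseteq> V \<longrightarrow> \<not> has_mark C A"
    unfolding freeI_def by blast
  have "\<not> has_mark C V" using i(3) i(2) assms by blast
  moreover obtain c where c: "c \<in> ch V" "En i \<in> c" using ch_cover[OF VV] i(2) by blast
  have "c \<subseteq> V" using ch_psub[OF c(1)] by blast
  hence "\<forall>A\<in>Es. En i \<in> A \<and> A \<subseteq> c \<longrightarrow> \<not> has_mark C A" using i(3) by blast
  hence "freeI c" unfolding freeI_def using i(1) c(2) by blast
  ultimately show "\<not> has_mark C V \<and> (\<exists>c\<in>ch V. freeI c)" using c(1) by blast
next
  have VV: "V \<in> VS" using assms by (simp add: VS_def')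
  assume H: "\<not> has_mark C V \<and> (\<exists>c\<in>ch V. freeI c)"
  then obtain c where c: "c \<in> ch V" "freeI c" by blast
  have nm: "\<not> has_mark C V" using H by blast
  from c(2) obtain i where i: "i \<notin> F" "En i \<in> c" and ci: "\<forall>A\<in>Es. En i \<in> A \<and> A \<subseteq> c \<longrightarrow> \<not> has_mark C A"
    unfolding freeI_def by blast
  have cV: "c \<subset> V" by (rule ch_psub[OF c(1)])
  have all: "\<forall>A\<in>Es. En i \<in> A \<and> A \<subseteq> V \<longrightarrow> \<not> has_mark C A"
  proof (intro ballI impI)
    fix A assume A: "A \<in> Es" "En i \<in> A \<and> A \<subseteq> V"
    show "\<not> has_mark C A"
    proof (cases "A = V")
      case True thus ?thesis using nm by simp
    next
      case False
      hence "A \<subset> V" using A by blast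
      moreover have "A \<in> items" using A(1) by (simp add: items_def)
      ultimately obtain c' where c': "c' \<in> ch V" "A \<subseteq> c'" using sub_child[OF VV] by blast
      have "En i \<in> c' \<inter> c" using c'(2) A(2) i(2) by blast
      hence "c' = c" using ch_disj[OF VV c'(1) c(1)] by blast
      hence "A \<subseteq> c" using c'(2) by simp
      thus ?thesis using ci A by blast
    qed
  qed
  have "En i \<in> V" using cV i(2) by blast
  thus "freeI V" unfolding freeI_def using i(1) all by blast
qed

lemma rho01: "rho I = 0 \<or> rho I = 1" by (simp add: rho_def)

lemma rho_R_sum: "(\<Sum>l\<in>R. rho {l}) = int (card (F - {0}))"
proof -
  have "rho {l} = (if l \<in> En ` (F - {0}) then 1 else 0)" if "l \<in> R" for l
  proof -
    have "{l} \<noteq> R"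
    proof
      assume a: "{l} = R"
      have "card {l} = 1" by simp
      hence "card R = 1" unfolding a .
      thus False using cardR2 by simp
    qed
    moreover have "l \<in> En ` (F - {0}) \<longleftrightarrow> \<not> isMk {l} \<and> \<not> freeI {l}"
    proof (cases l)
      case (Mk m) thus ?thesis using free_Mk[of m] by (auto simp: isMk_def)
    next
      case (En i)
      have "i \<noteq> 0"
      proof
        assume "i = 0" thus False using that En En0_notin_R by simp
      qed
      moreover have "\<not> isMk {l}" using En by (auto simp: isMk_def)
      ultimately show ?thesis using En free_En[of i] by auto
    qed
    ultimately show ?thesis by (auto simp: rho_def)
  qed
  hence "(\<Sum>l\<in>R. rho {l}) = (\<Sum>l\<in>R. if l \<in> En ` (F - {0}) then 1 else 0)" by (rule sum.cong[OF refl])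
  also have "\<dots> = int (card {l\<in>R. l \<in> En ` (F - {0})})" by (rule sum_ind[OF finR])
  also have "{l\<in>R. l \<in> En ` (F - {0})} = En ` (F - {0})" using Fsub by (auto simp: R_def' leaves_def)
  also have "card (En ` (F - {0})) = card (F - {0})" by (simp add: card_image inj_on_def)
  finally show ?thesis .
qed

definition Dv :: "leaf set \<Rightarrow> int" where
  "Dv V = rho V - (\<Sum>c\<in>ch V. rho c) + 1 - 2 * int (mcnt V)"

lemma sum_Dv: "(\<Sum>V\<in>VS. Dv V) = int (card Es) + 2 - (2 * int (r + s) + int (card F))"
proof -
  have gen: "(\<Sum>x\<in>A. f x - g x + 1 - 2 * k x) = sum f A - sum g A + int (card A) - 2 * sum k A"
    for A :: "leaf set set" and f g k :: "leaf set \<Rightarrow> int"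
    by (simp add: sum_subtractf sum.distrib sum_distrib_left)
  have "(\<Sum>V\<in>VS. Dv V) = (\<Sum>V\<in>VS. rho V) - (\<Sum>V\<in>VS. \<Sum>c\<in>ch V. rho c) + int (card VS) - 2 * (\<Sum>V\<in>VS. int (mcnt V))"
    unfolding Dv_def by (rule gen)
  also have "(\<Sum>V\<in>VS. rho V) = rho R + (\<Sum>A\<in>Es. rho A)"
  proof -
    have "R \<notin> Es" using Es_neR by blast
    thus ?thesis using finEs by (simp add: VS_def')
  qed
  also have "(\<Sum>V\<in>VS. \<Sum>c\<in>ch V. rho c) = (\<Sum>A\<in>Es. rho A) + (\<Sum>l\<in>R. rho {l})" by (rule telescope)
  also note rho_R_sum
  also note sum_mcnt
  also note cardVS
  finally have *: "(\<Sum>V\<in>VS. Dv V) = rho R - int (card (F - {0})) + int (card Es + 1) - 2 * int (r + s)" by simp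
  have "rho R - int (card (F - {0})) = 1 - int (card F)"
  proof (cases "0 \<in> F")
    case True
    have "\<not> isMk R"
    proof
      assume "isMk R" then obtain m where "R = {Mk m}" by (auto simp: isMk_def)
      hence "card R = 1" by simp
      thus False using cardR2 by simp
    qed
    hence "rho R = 0" using True by (simp add: rho_def)
    moreover have "card (F - {0}) = card F - 1" using True by (simp add: card_Diff_singleton)
    moreover have "card F \<ge> 1" using True finF by (metis One_nat_def Suc_leI card_gt_0_iff empty_iff)
    ultimately show ?thesis by simp
  next
    case False
    have "\<not> isMk R"
    proof
      assume "isMk R" then obtain m where "R = {Mk m}" by (auto simp: isMk_def)
      hence "card R = 1" by simp
      thus False using cardR2 by simp
    qed
    thus ?thesis using False by (simp add: rho_def)
  qed
  thus ?thesis using * by simp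
qed

end

lemma sum_app: "(sum f A) x = sum (\<lambda>a. f a x) A"
  by (induction A rule: infinite_finite_induct) auto

interpretation fv: vector_space "\<lambda>(c::real) (f::evidx \<Rightarrow> real) j. c * f j"
  by unfold_locales (auto simp: fun_eq_iff algebra_simps)

lemma fv_scale_sum: "(\<Sum>v\<in>B. (\<lambda>j. u v * v j)) = (\<lambda>j. \<Sum>v\<in>B. u v * v j)"
  by (rule ext) (simp add: sum_app)

lemma lin_indep_indep: assumes "finite B" "lin_indep_fn B" shows "fv.independent B"
proof
  assume "fv.dependent B"
  then obtain u where u: "\<exists>v\<in>B. u v \<noteq> 0" "(\<Sum>v\<in>B. (\<lambda>j. u v * v j)) = 0"
    using fv.dependent_finite[OF assms(1)] by blast
  have "\<forall>j. (\<Sum>b\<in>B. u b * b j) = 0"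
  proof
    fix j show "(\<Sum>b\<in>B. u b * b j) = 0" using fun_cong[OF u(2), of j] by (simp add: fv_scale_sum)
  qed
  thus False using assms(2) u(1) unfolding lin_indep_fn_def by blast
qed

lemma aff_bound:
  assumes dif: "\<forall>p\<in>Y. \<forall>q\<in>Y. (\<lambda>j. p j - q j) \<in> fv.span S" and fS: "finite S" and cS: "card S < k"
  shows "aff_dim_fn Y < k"
proof -
  let ?P = "\<lambda>k. \<exists>B. finite B \<and> card B = k \<and> lin_indep_fn B \<and> B \<subseteq> {(\<lambda>j. p j - q j) | p q. p \<in> Y \<and> q \<in> Y}"
  have bnd: "\<forall>y. ?P y \<longrightarrow> y \<le> card S"
  proof (intro allI impI)
    fix y assume "?P y"
    then obtain B where B: "finite B" "card B = y" "lin_indep_fn B" "B \<subseteq> {(\<lambda>j. p j - q j) | p q. p \<in> Y \<and> q \<in> Y}" by blast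
    have "B \<subseteq> fv.span S" using B(4) dif by blast
    from fv.independent_span_bound[OF fS lin_indep_indep[OF B(1,3)] this] show "y \<le> card S" using B(2) by simp
  qed
  have P0: "?P 0" by (rule exI[of _ "{}"]) (simp add: lin_indep_fn_def)
  have "?P (Greatest ?P)" using GreatestI_nat[of ?P 0 "card S"] P0 bnd by blast
  hence "Greatest ?P \<le> card S" using bnd by blast
  thus ?thesis using cS unfolding aff_dim_fn_def by simp
qed

definition delta :: "evidx \<Rightarrow> evidx \<Rightarrow> real" where "delta j = (\<lambda>k. if k = j then 1 else 0)"

lemma lam_span:
  fixes lam :: "evidx \<Rightarrow> real"
  assumes fJ: "finite Jj" and j0: "j0 \<in> Jj" "lam j0 \<noteq> 0"
  shows "\<exists>S. finite S \<and> card S < card Jj \<and>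
     {v. (\<forall>j. j \<notin> Jj \<longrightarrow> v j = 0) \<and> (\<Sum>j\<in>Jj. lam j * v j) = 0} \<subseteq> fv.span S"
proof -
  define b where "b j = (\<lambda>k. delta j k - (lam j / lam j0) * delta j0 k)" for j
  let ?S = "b ` (Jj - {j0})"
  have fS: "finite ?S" using fJ by simp
  have cS: "card ?S < card Jj"
  proof -
    have "card ?S \<le> card (Jj - {j0})" by (rule card_image_le) (simp add: fJ)
    also have "\<dots> < card Jj" by (rule card_Diff1_less[OF fJ j0(1)])
    finally show ?thesis .
  qed
  have "v \<in> fv.span ?S" if v: "\<forall>j. j \<notin> Jj \<longrightarrow> v j = 0" "(\<Sum>j\<in>Jj. lam j * v j) = 0" for v
  proof -
    have eq: "v = (\<Sum>j\<in>Jj - {j0}. (\<lambda>k. v j * b j k))"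
    proof (rule ext)
      fix k
      have R: "(\<Sum>j\<in>Jj - {j0}. (\<lambda>k. v j * b j k)) k = (\<Sum>j\<in>Jj - {j0}. v j * delta j k) - (\<Sum>j\<in>Jj - {j0}. v j * lam j) / lam j0 * delta j0 k"
        by (simp add: sum_app b_def algebra_simps sum_subtractf sum_divide_distrib sum_distrib_left sum_distrib_right)
      have s1: "(\<Sum>j\<in>Jj - {j0}. v j * lam j) = - (lam j0 * v j0)"
      proof -
        have "(\<Sum>j\<in>Jj. lam j * v j) = lam j0 * v j0 + (\<Sum>j\<in>Jj - {j0}. lam j * v j)"
          using fJ j0(1) by (simp add: sum.remove)
        thus ?thesis using v(2) by (simp add: mult.commute)
      qed
      show "v k = (\<Sum>j\<in>Jj - {j0}. (\<lambda>k. v j * b j k)) k"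
      proof (cases "k \<in> Jj - {j0}")
        case True
        have "(\<Sum>j\<in>Jj - {j0}. v j * delta j k) = v k"
          using True fJ by (simp add: delta_def sum.delta' if_distrib cong: if_cong)
        moreover have "delta j0 k = 0" using True by (auto simp: delta_def)
        ultimately show ?thesis using R by simp
      next
        case False
        have z: "(\<Sum>j\<in>Jj - {j0}. v j * delta j k) = 0"
          by (rule sum.neutral) (use False in \<open>auto simp: delta_def\<close>)
        show ?thesis
        proof (cases "k = j0")
          case True thus ?thesis using R z s1 j0(2) by (simp add: delta_def)
        next
          case False2: False
          hence "k \<notin> Jj" using False by blast
          thus ?thesis using R z v(1) False2 by (simp add: delta_def)
        qed
      qed
    qed
    have "(\<Sum>j\<in>Jj - {j0}. (\<lambda>k. v j * b j k)) \<in> fv.span ?S"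
      by (rule fv.span_sum) (auto intro: fv.span_scale fv.span_base)
    thus ?thesis using eq by simp
  qed
  thus ?thesis using fS cS by blast
qed


definition srr :: "ivec list \<Rightarrow> leaf set \<Rightarrow> real \<times> real" where
  "srr D A = (real_of_int (fst (sigma D A)), real_of_int (snd (sigma D A)))"

definition gA :: "nat \<Rightarrow> nat \<Rightarrow> ivec list \<Rightarrow> nat set \<Rightarrow> leaf set \<Rightarrow> evidx \<Rightarrow> real" where
  "gA r s D F A j = (case j of
      PX i \<Rightarrow> if i < r + s \<and> Mk i \<in> A then real_of_int (fst (sigma D A)) else 0
    | PY i \<Rightarrow> if i < r + s \<and> Mk i \<in> A then real_of_int (snd (sigma D A)) else 0
    | FL i \<Rightarrow> if i \<in> F \<and> En i \<in> A then real_of_int (fst (D!i)) * real_of_int (snd (sigma D A))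
                   - real_of_int (snd (D!i)) * real_of_int (fst (sigma D A)) else 0)"

definition e1 :: "nat \<Rightarrow> nat \<Rightarrow> ivec list \<Rightarrow> nat set \<Rightarrow> evidx \<Rightarrow> real" where
  "e1 r s D F j = (case j of PX i \<Rightarrow> if i < r + s then 1 else 0 | PY i \<Rightarrow> 0
     | FL i \<Rightarrow> if i \<in> F then - real_of_int (snd (D!i)) else 0)"
definition e2 :: "nat \<Rightarrow> nat \<Rightarrow> ivec list \<Rightarrow> nat set \<Rightarrow> evidx \<Rightarrow> real" where
  "e2 r s D F j = (case j of PX i \<Rightarrow> 0 | PY i \<Rightarrow> if i < r + s then 1 else 0
     | FL i \<Rightarrow> if i \<in> F then real_of_int (fst (D!i)) else 0)"

lemma sum_if_diff: "(\<Sum>x\<in>A. if P x then f x - g x else (0::real)) = (\<Sum>x\<in>A. if P x then f x else 0) - (\<Sum>x\<in>A. if P x then g x else 0)"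
  by (induction A rule: infinite_finite_induct) auto
lemma mult_if_0: "(a::real) * (if P then b else 0) = (if P then a * b else 0)" by simp
lemma if_0_mult: "(c::real) * (\<Sum>x\<in>A. if P x then f x else 0) = (\<Sum>x\<in>A. if P x then c * f x else 0)"
  by (simp add: sum_distrib_left if_distrib cong: if_cong)

lemma ev_exp: assumes "finite (edgesS C)"
  shows "ev r s D F C j = (\<Sum>A\<in>edgesS C. \<bar>fst C A\<bar> * gA r s D F A j) + fst (snd C) * e1 r s D F j + snd (snd C) * e2 r s D F j"
proof -
  have fl: "(\<Sum>A\<in>{A\<in>edgesS C. l \<in> A}. f A) = (\<Sum>A\<in>edgesS C. if l \<in> A then f A else 0)" for l and f :: "leaf set \<Rightarrow> real"
    using assms by (simp add: sum.inter_filter)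
  show ?thesis
  proof (cases j)
    case (PX i) thus ?thesis
      by (auto simp: ev_def pos_def gA_def e1_def e2_def fl intro!: sum.cong)
  next
    case (PY i) thus ?thesis
      by (auto simp: ev_def pos_def gA_def e1_def e2_def fl intro!: sum.cong)
  next
    case (FL i)
    show ?thesis
    proof (cases "i \<in> F")
      case False thus ?thesis using FL by (simp add: ev_def gA_def e1_def e2_def)
    next
      case True
      let ?x = "real_of_int (fst (D!i))" and ?y = "real_of_int (snd (D!i))"
      have "ev r s D F C j = ?x * (snd (snd C) + (\<Sum>A\<in>edgesS C. if En i \<in> A then \<bar>fst C A\<bar> * real_of_int (snd (sigma D A)) else 0))
             - ?y * (fst (snd C) + (\<Sum>A\<in>edgesS C. if En i \<in> A then \<bar>fst C A\<bar> * real_of_int (fst (sigma D A)) else 0))"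
        using FL True by (simp add: ev_def pos_def fl)
      also have "\<dots> = (\<Sum>A\<in>edgesS C. \<bar>fst C A\<bar> * gA r s D F A j) + fst (snd C) * e1 r s D F j + snd (snd C) * e2 r s D F j"
      proof -
        have "(\<Sum>A\<in>edgesS C. \<bar>fst C A\<bar> * gA r s D F A j) =
           (\<Sum>A\<in>edgesS C. if En i \<in> A then ?x * (\<bar>fst C A\<bar> * real_of_int (snd (sigma D A)))
                - ?y * (\<bar>fst C A\<bar> * real_of_int (fst (sigma D A))) else 0)"
          using FL True by (intro sum.cong) (auto simp: gA_def algebra_simps)
        also have "\<dots> = ?x * (\<Sum>A\<in>edgesS C. if En i \<in> A then \<bar>fst C A\<bar> * real_of_int (snd (sigma D A)) else 0)
           - ?y * (\<Sum>A\<in>edgesS C. if En i \<in> A then \<bar>fst C A\<bar> * real_of_int (fst (sigma D A)) else 0)"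
          by (simp only: sum_if_diff if_0_mult)
        finally show ?thesis using FL True by (simp add: e1_def e2_def algebra_simps)
      qed
      finally show ?thesis .
    qed
  qed
qed

lemma ev_diff_span:
  assumes "finite (edgesS C1)" "edgesS C2 = edgesS C1"
  shows "(\<lambda>j. ev r s D F C1 j - ev r s D F C2 j) \<in> fv.span (gA r s D F ` edgesS C1 \<union> {e1 r s D F, e2 r s D F})"
proof -
  let ?S = "gA r s D F ` edgesS C1 \<union> {e1 r s D F, e2 r s D F}"
  let ?c = "\<lambda>A. \<bar>fst C1 A\<bar> - \<bar>fst C2 A\<bar>"
  have eq: "(\<lambda>j. ev r s D F C1 j - ev r s D F C2 j) =
     (\<lambda>j. (\<Sum>A\<in>edgesS C1. (\<lambda>j. ?c A * gA r s D F A j)) j + (fst (snd C1) - fst (snd C2)) * e1 r s D F j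
           + (snd (snd C1) - snd (snd C2)) * e2 r s D F j)"
    using assms by (auto simp: ev_exp sum_app algebra_simps sum_subtractf)
  have "(\<Sum>A\<in>edgesS C1. (\<lambda>j. ?c A * gA r s D F A j)) \<in> fv.span ?S"
    by (rule fv.span_sum) (auto intro: fv.span_scale fv.span_base)
  moreover have "(\<lambda>j. (fst (snd C1) - fst (snd C2)) * e1 r s D F j) \<in> fv.span ?S"
    by (auto intro: fv.span_scale fv.span_base)
  moreover have "(\<lambda>j. (snd (snd C1) - snd (snd C2)) * e2 r s D F j) \<in> fv.span ?S"
    by (auto intro: fv.span_scale fv.span_base)
  ultimately have "(\<Sum>A\<in>edgesS C1. (\<lambda>j. ?c A * gA r s D F A j)) + (\<lambda>j. (fst (snd C1) - fst (snd C2)) * e1 r s D F j)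
      + (\<lambda>j. (snd (snd C1) - snd (snd C2)) * e2 r s D F j) \<in> fv.span ?S"
    by (intro fv.span_add)
  thus ?thesis using eq by (simp add: plus_fun_def)
qed

definition Jset :: "nat \<Rightarrow> nat \<Rightarrow> nat set \<Rightarrow> evidx set" where
  "Jset r s F = PX ` {..<r+s} \<union> PY ` {..<r+s} \<union> FL ` F"

lemma Jset_fin: "finite F \<Longrightarrow> finite (Jset r s F)" by (simp add: Jset_def)
lemma Jset_card: "finite F \<Longrightarrow> card (Jset r s F) = 2 * (r + s) + card F"
proof -
  assume fF: "finite F"
  have "card (PX ` {..<r+s} \<union> PY ` {..<r+s} \<union> FL ` F) = card (PX ` {..<r+s} \<union> PY ` {..<r+s}) + card (FL ` F)"
    by (rule card_Un_disjoint) (auto simp: fF)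
  also have "card (PX ` {..<r+s} \<union> PY ` {..<r+s}) = card (PX ` {..<r+s}) + card (PY ` {..<r+s})"
    by (rule card_Un_disjoint) auto
  finally show ?thesis by (simp add: Jset_def card_image inj_on_def)
qed

lemma Jsum: assumes "finite F" "F \<subseteq> {..<n}"
  shows "(\<Sum>j\<in>Jset r s F. h j) = (\<Sum>l\<in>leaves r s n. (case l of Mk m \<Rightarrow> h (PX m) + h (PY m) | En i \<Rightarrow> if i \<in> F then h (FL i) else 0))"
proof -
  let ?f = "\<lambda>l. (case l of Mk m \<Rightarrow> h (PX m) + h (PY m) | En i \<Rightarrow> if i \<in> F then h (FL i) else 0)"
  have "(\<Sum>j\<in>Jset r s F. h j) = (\<Sum>j\<in>PX ` {..<r+s} \<union> PY ` {..<r+s}. h j) + (\<Sum>j\<in>FL ` F. h j)"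
    unfolding Jset_def by (rule sum.union_disjoint) (auto simp: assms)
  also have "(\<Sum>j\<in>PX ` {..<r+s} \<union> PY ` {..<r+s}. h j) = (\<Sum>j\<in>PX ` {..<r+s}. h j) + (\<Sum>j\<in>PY ` {..<r+s}. h j)"
    by (rule sum.union_disjoint) auto
  also have "(\<Sum>j\<in>PX ` {..<r+s}. h j) = (\<Sum>m<r+s. h (PX m))" by (simp add: sum.reindex inj_on_def)
  also have "(\<Sum>j\<in>PY ` {..<r+s}. h j) = (\<Sum>m<r+s. h (PY m))" by (simp add: sum.reindex inj_on_def)
  also have "(\<Sum>j\<in>FL ` F. h j) = (\<Sum>i\<in>F. h (FL i))" by (simp add: sum.reindex inj_on_def)
  finally have L: "(\<Sum>j\<in>Jset r s F. h j) = (\<Sum>m<r+s. h (PX m) + h (PY m)) + (\<Sum>i\<in>F. h (FL i))"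
    by (simp add: sum.distrib)
  have "(\<Sum>l\<in>leaves r s n. ?f l) = (\<Sum>l\<in>Mk ` {..<r+s}. ?f l) + (\<Sum>l\<in>En ` {..<n}. ?f l)"
    unfolding leaves_def by (rule sum.union_disjoint) auto
  also have "(\<Sum>l\<in>Mk ` {..<r+s}. ?f l) = (\<Sum>m<r+s. h (PX m) + h (PY m))" by (simp add: sum.reindex inj_on_def)
  also have "(\<Sum>l\<in>En ` {..<n}. ?f l) = (\<Sum>i<n. if i \<in> F then h (FL i) else 0)" by (simp add: sum.reindex inj_on_def)
  also have "\<dots> = (\<Sum>i\<in>F. h (FL i))"
  proof -
    have "{..<n} \<inter> F = F" using assms(2) by blast
    thus ?thesis by (simp add: sum.If_cases)
  qed
  finally show ?thesis using L by simp
qed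


definition dot :: "real \<times> real \<Rightarrow> real \<times> real \<Rightarrow> real" where "dot x y = fst x * fst y + snd x * snd y"
definition Jv :: "ivec list \<Rightarrow> nat \<Rightarrow> real \<times> real" where
  "Jv D i = (- real_of_int (snd (D!i)), real_of_int (fst (D!i)))"
definition lamf :: "(nat \<Rightarrow> real \<times> real) \<Rightarrow> (nat \<Rightarrow> real) \<Rightarrow> evidx \<Rightarrow> real" where
  "lamf wm cf j = (case j of PX m \<Rightarrow> fst (wm m) | PY m \<Rightarrow> snd (wm m) | FL i \<Rightarrow> cf i)"
definition lc :: "ivec list \<Rightarrow> nat set \<Rightarrow> (nat \<Rightarrow> real \<times> real) \<Rightarrow> (nat \<Rightarrow> real) \<Rightarrow> leaf \<Rightarrow> real \<times> real" where
  "lc D F wm cf l = (case l of Mk m \<Rightarrow> wm m | En i \<Rightarrow> if i \<in> F then cf i *\<^sub>R Jv D i else 0)"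
definition cov :: "ivec list \<Rightarrow> nat set \<Rightarrow> (nat \<Rightarrow> real \<times> real) \<Rightarrow> (nat \<Rightarrow> real) \<Rightarrow> leaf set \<Rightarrow> real \<times> real" where
  "cov D F wm cf A = (\<Sum>l\<in>A. lc D F wm cf l)"

lemma dot_sum: "dot (\<Sum>x\<in>A. f x) y = (\<Sum>x\<in>A. dot (f x) y)"
  by (induction A rule: infinite_finite_induct) (auto simp: dot_def algebra_simps)

lemma pair_g:
  assumes "finite F" "F \<subseteq> {..<n}" "A \<subseteq> leaves r s n"
  shows "(\<Sum>j\<in>Jset r s F. lamf wm cf j * gA r s D F A j) = dot (cov D F wm cf A) (srr D A)"
proof -
  have fA: "finite A" using assms(3) finite_leaves finite_subset by blast
  have "(\<Sum>j\<in>Jset r s F. lamf wm cf j * gA r s D F A j) =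
     (\<Sum>l\<in>leaves r s n. (case l of Mk m \<Rightarrow> lamf wm cf (PX m) * gA r s D F A (PX m) + lamf wm cf (PY m) * gA r s D F A (PY m)
        | En i \<Rightarrow> if i \<in> F then lamf wm cf (FL i) * gA r s D F A (FL i) else 0))"
    by (rule Jsum[OF assms(1,2)])
  also have "\<dots> = (\<Sum>l\<in>leaves r s n. if l \<in> A then dot (lc D F wm cf l) (srr D A) else 0)"
  proof (rule sum.cong[OF refl])
    fix l assume l: "l \<in> leaves r s n"
    show "(case l of Mk m \<Rightarrow> lamf wm cf (PX m) * gA r s D F A (PX m) + lamf wm cf (PY m) * gA r s D F A (PY m)
        | En i \<Rightarrow> if i \<in> F then lamf wm cf (FL i) * gA r s D F A (FL i) else 0) =
        (if l \<in> A then dot (lc D F wm cf l) (srr D A) else 0)"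
    proof (cases l)
      case (Mk m)
      hence "m < r + s" using l by (auto simp: leaves_def)
      thus ?thesis using Mk by (simp add: lamf_def gA_def lc_def dot_def srr_def)
    next
      case (En i) thus ?thesis by (simp add: lamf_def gA_def lc_def dot_def srr_def Jv_def algebra_simps)
    qed
  qed
  also have "\<dots> = (\<Sum>l\<in>A. dot (lc D F wm cf l) (srr D A))"
  proof -
    have "leaves r s n \<inter> A = A" using assms(3) by blast
    thus ?thesis using finite_leaves by (simp add: sum.If_cases)
  qed
  also have "\<dots> = dot (cov D F wm cf A) (srr D A)" by (simp add: cov_def dot_sum)
  finally show ?thesis .
qed

lemma pair_e:
  assumes "finite F" "F \<subseteq> {..<n}"
  shows "(\<Sum>j\<in>Jset r s F. lamf wm cf j * e1 r s D F j) = fst (cov D F wm cf (leaves r s n))"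
    and "(\<Sum>j\<in>Jset r s F. lamf wm cf j * e2 r s D F j) = snd (cov D F wm cf (leaves r s n))"
proof -
  have "(\<Sum>j\<in>Jset r s F. lamf wm cf j * e1 r s D F j) =
     (\<Sum>l\<in>leaves r s n. (case l of Mk m \<Rightarrow> lamf wm cf (PX m) * e1 r s D F (PX m) + lamf wm cf (PY m) * e1 r s D F (PY m)
        | En i \<Rightarrow> if i \<in> F then lamf wm cf (FL i) * e1 r s D F (FL i) else 0))"
    by (rule Jsum[OF assms(1,2)])
  also have "\<dots> = (\<Sum>l\<in>leaves r s n. fst (lc D F wm cf l))"
  proof (rule sum.cong[OF refl])
    fix l assume l: "l \<in> leaves r s n"
    show "(case l of Mk m \<Rightarrow> lamf wm cf (PX m) * e1 r s D F (PX m) + lamf wm cf (PY m) * e1 r s D F (PY m)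
        | En i \<Rightarrow> if i \<in> F then lamf wm cf (FL i) * e1 r s D F (FL i) else 0) = fst (lc D F wm cf l)"
    proof (cases l)
      case (Mk m)
      hence "m < r + s" using l by (auto simp: leaves_def)
      thus ?thesis using Mk by (simp add: lamf_def e1_def lc_def)
    next
      case (En i) thus ?thesis by (simp add: lamf_def e1_def lc_def Jv_def)
    qed
  qed
  also have "\<dots> = fst (cov D F wm cf (leaves r s n))" by (simp add: cov_def fst_sum)
  finally show "(\<Sum>j\<in>Jset r s F. lamf wm cf j * e1 r s D F j) = fst (cov D F wm cf (leaves r s n))" .
  have "(\<Sum>j\<in>Jset r s F. lamf wm cf j * e2 r s D F j) =
     (\<Sum>l\<in>leaves r s n. (case l of Mk m \<Rightarrow> lamf wm cf (PX m) * e2 r s D F (PX m) + lamf wm cf (PY m) * e2 r s D F (PY m)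
        | En i \<Rightarrow> if i \<in> F then lamf wm cf (FL i) * e2 r s D F (FL i) else 0))"
    by (rule Jsum[OF assms(1,2)])
  also have "\<dots> = (\<Sum>l\<in>leaves r s n. snd (lc D F wm cf l))"
  proof (rule sum.cong[OF refl])
    fix l assume l: "l \<in> leaves r s n"
    show "(case l of Mk m \<Rightarrow> lamf wm cf (PX m) * e2 r s D F (PX m) + lamf wm cf (PY m) * e2 r s D F (PY m)
        | En i \<Rightarrow> if i \<in> F then lamf wm cf (FL i) * e2 r s D F (FL i) else 0) = snd (lc D F wm cf l)"
    proof (cases l)
      case (Mk m)
      hence "m < r + s" using l by (auto simp: leaves_def)
      thus ?thesis using Mk by (simp add: lamf_def e2_def lc_def)
    next
      case (En i) thus ?thesis by (simp add: lamf_def e2_def lc_def Jv_def)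
    qed
  qed
  also have "\<dots> = snd (cov D F wm cf (leaves r s n))" by (simp add: cov_def snd_sum)
  finally show "(\<Sum>j\<in>Jset r s F. lamf wm cf j * e2 r s D F j) = snd (cov D F wm cf (leaves r s n))" .
qed

lemma supp_gA: "j \<notin> Jset r s F \<Longrightarrow> gA r s D F A j = 0"
  by (cases j) (auto simp: Jset_def gA_def)
lemma supp_e1: "j \<notin> Jset r s F \<Longrightarrow> e1 r s D F j = 0"
  by (cases j) (auto simp: Jset_def e1_def)
lemma supp_e2: "j \<notin> Jset r s F \<Longrightarrow> e2 r s D F j = 0"
  by (cases j) (auto simp: Jset_def e2_def)

lemma lam_kill:
  assumes fF: "finite F" and Fn: "F \<subseteq> {..<n}"
    and kill: "\<forall>A\<in>Es'. A \<subseteq> leaves r s n \<and> dot (cov D F wm cf A) (srr D A) = 0"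
    and tot: "cov D F wm cf (leaves r s n) = 0"
    and j0: "j0 \<in> Jset r s F" "lamf wm cf j0 \<noteq> 0"
  shows "\<exists>S. finite S \<and> card S < 2 * (r + s) + card F \<and> gA r s D F ` Es' \<union> {e1 r s D F, e2 r s D F} \<subseteq> fv.span S"
proof -
  let ?lam = "lamf wm cf" and ?J = "Jset r s F"
  obtain S where S: "finite S" "card S < card ?J"
    "{v. (\<forall>j. j \<notin> ?J \<longrightarrow> v j = 0) \<and> (\<Sum>j\<in>?J. ?lam j * v j) = 0} \<subseteq> fv.span S"
    using lam_span[of "Jset r s F" j0 ?lam] Jset_fin[OF fF] j0 by blast
  have "gA r s D F A \<in> fv.span S" if A: "A \<in> Es'" for A
  proof (rule subsetD[OF S(3)], intro CollectI conjI allI impI)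
    fix j assume "j \<notin> ?J" thus "gA r s D F A j = 0" by (rule supp_gA)
  next
    have "A \<subseteq> leaves r s n" "dot (cov D F wm cf A) (srr D A) = 0" using kill A by auto
    thus "(\<Sum>j\<in>?J. ?lam j * gA r s D F A j) = 0"
      using pair_g[OF fF Fn, where A=A and wm=wm and cf=cf and D=D and r=r and s=s] by simp
  qed
  moreover have "e1 r s D F \<in> fv.span S"
  proof (rule subsetD[OF S(3)], intro CollectI conjI allI impI)
    fix j assume "j \<notin> ?J" thus "e1 r s D F j = 0" by (rule supp_e1)
  next
    show "(\<Sum>j\<in>?J. ?lam j * e1 r s D F j) = 0"
      using pair_e(1)[OF fF Fn, where wm=wm and cf=cf and D=D and r=r and s=s] tot by simp
  qed
  moreover have "e2 r s D F \<in> fv.span S"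
  proof (rule subsetD[OF S(3)], intro CollectI conjI allI impI)
    fix j assume "j \<notin> ?J" thus "e2 r s D F j = 0" by (rule supp_e2)
  next
    show "(\<Sum>j\<in>?J. ?lam j * e2 r s D F j) = 0"
      using pair_e(2)[OF fF Fn, where wm=wm and cf=cf and D=D and r=r and s=s] tot by simp
  qed
  ultimately have sub: "gA r s D F ` Es' \<union> {e1 r s D F, e2 r s D F} \<subseteq> fv.span S" by blast
  have "card S < 2 * (r + s) + card F" using S(2) Jset_card[OF fF] by simp
  thus ?thesis using S(1) sub by blast
qed


lemma no_small:
  assumes desc: "is_desc r s D C" and evP: "ev r s D F C = P"
    and gp: "gen_pos r s D F (M_desc_closure r s D) P" and fin: "finite (edgesS C)"
    and S: "finite S" "card S < 2 * (r + s) + card F" "gA r s D F ` edgesS C \<union> {e1 r s D F, e2 r s D F} \<subseteq> fv.span S"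
  shows False
proof -
  let ?M = "M_desc_closure r s D"
  let ?X = "{C'\<in>?M. sgn \<circ> fst C' = sgn \<circ> fst C}"
  have CM: "C \<in> ?M" unfolding M_desc_closure_def using desc closure_subset by blast
  have Xc: "?X \<in> cells ?M" unfolding cells_def using CM by blast
  have eE: "edgesS C' = edgesS C" if "C' \<in> ?X" for C'
  proof -
    have "sgn (fst C' A) = sgn (fst C A)" for A using that by (simp add: comp_def fun_eq_iff)
    hence "(fst C' A \<noteq> 0) = (fst C A \<noteq> 0)" for A by (metis sgn_eq_0_iff)
    thus ?thesis unfolding edgesS_def by simp
  qed
  have sp: "fv.span (gA r s D F ` edgesS C \<union> {e1 r s D F, e2 r s D F}) \<subseteq> fv.span S"
    using fv.span_mono[OF S(3)] fv.span_span by simp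
  have dif: "\<forall>p\<in>ev r s D F ` ?X. \<forall>q\<in>ev r s D F ` ?X. (\<lambda>j. p j - q j) \<in> fv.span S"
  proof (intro ballI)
    fix p q assume "p \<in> ev r s D F ` ?X" "q \<in> ev r s D F ` ?X"
    then obtain C1 C2 where C: "C1 \<in> ?X" "C2 \<in> ?X" "p = ev r s D F C1" "q = ev r s D F C2" by blast
    have e1: "edgesS C1 = edgesS C" "edgesS C2 = edgesS C" using eE C(1,2) by auto
    have "(\<lambda>j. ev r s D F C1 j - ev r s D F C2 j) \<in> fv.span (gA r s D F ` edgesS C1 \<union> {e1 r s D F, e2 r s D F})"
      by (rule ev_diff_span) (use e1 fin in auto)
    hence "(\<lambda>j. ev r s D F C1 j - ev r s D F C2 j) \<in> fv.span S" using sp e1(1) by auto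
    thus "(\<lambda>j. p j - q j) \<in> fv.span S" using C(3,4) by simp
  qed
  have "aff_dim_fn (ev r s D F ` ?X) < 2 * (r + s) + card F" by (rule aff_bound[OF dif S(1,2)])
  hence "P \<notin> ev r s D F ` ?X" using gp Xc unfolding gen_pos_def by blast
  moreover have "C \<in> ?X" using CM by simp
  ultimately show False using evP by blast
qed

definition Jr :: "real \<times> real \<Rightarrow> real \<times> real" where "Jr x = (- snd x, fst x)"
lemma dot_Jr: "dot (Jr x) x = 0" by (simp add: dot_def Jr_def)
lemma Jr_sum: "Jr (\<Sum>x\<in>A. f x) = (\<Sum>x\<in>A. Jr (f x))"
  by (simp add: Jr_def prod_eq_iff fst_sum snd_sum sum_negf)
lemma Jr_add: "Jr (x + y) = Jr x + Jr y" by (simp add: Jr_def)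
lemma Jr_uminus: "Jr (- x) = - Jr x" by (simp add: Jr_def)
lemma Jr_nz: "x \<noteq> 0 \<Longrightarrow> Jr x \<noteq> 0" by (cases x) (auto simp: Jr_def zero_prod_def)
lemma Jv_Jr: "Jv D i = Jr (srr D {En i})" by (simp add: Jv_def Jr_def srr_def sigma_def vdir_def)
lemma dot_zero: "dot 0 x = 0" by (simp add: dot_def)

definition pm :: "nat \<Rightarrow> real \<times> real \<Rightarrow> nat \<Rightarrow> real \<times> real" where "pm a w = (\<lambda>m. if m = a then w else 0)"
definition pc :: "nat \<Rightarrow> nat \<Rightarrow> real" where "pc a = (\<lambda>k. if k = a then 1 else 0)"

lemma lc_add: "lc D F (\<lambda>m. wm1 m + wm2 m) (\<lambda>i. cf1 i + cf2 i) l = lc D F wm1 cf1 l + lc D F wm2 cf2 l"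
  by (cases l) (auto simp: lc_def scaleR_add_left)
lemma cov_add: "cov D F (\<lambda>m. wm1 m + wm2 m) (\<lambda>i. cf1 i + cf2 i) A = cov D F wm1 cf1 A + cov D F wm2 cf2 A"
  by (simp add: cov_def lc_add sum.distrib)
lemma lc_sum: "finite K \<Longrightarrow> lc D F (\<lambda>m. \<Sum>k\<in>K. W k m) (\<lambda>i. \<Sum>k\<in>K. CF k i) l = (\<Sum>k\<in>K. lc D F (W k) (CF k) l)"
  by (cases l) (auto simp: lc_def scaleR_sum_left)
lemma cov_sum: "finite K \<Longrightarrow> cov D F (\<lambda>m. \<Sum>k\<in>K. W k m) (\<lambda>i. \<Sum>k\<in>K. CF k i) A = (\<Sum>k\<in>K. cov D F (W k) (CF k) A)"
  by (simp add: cov_def lc_sum sum.swap[of _ K A])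
lemma lamf_add: "lamf (\<lambda>m. wm1 m + wm2 m) (\<lambda>i. cf1 i + cf2 i) j = lamf wm1 cf1 j + lamf wm2 cf2 j"
  by (cases j) (auto simp: lamf_def)
lemma lamf_sum: "lamf (\<lambda>m. \<Sum>k\<in>K. W k m) (\<lambda>i. \<Sum>k\<in>K. CF k i) j = (\<Sum>k\<in>K. lamf (W k) (CF k) j)"
  by (cases j) (auto simp: lamf_def fst_sum snd_sum)
lemma cov_pm: "finite A \<Longrightarrow> cov D F (pm a w) (\<lambda>_. 0) A = (if Mk a \<in> A then w else 0)"
proof -
  assume fA: "finite A"
  have "cov D F (pm a w) (\<lambda>_. 0) A = (\<Sum>l\<in>A. if l = Mk a then w else 0)"
    unfolding cov_def by (rule sum.cong) (auto simp: lc_def pm_def split: leaf.split)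
  thus ?thesis using fA by (simp add: sum.delta')
qed
lemma cov_pc: "finite A \<Longrightarrow> a \<in> F \<Longrightarrow> cov D F (\<lambda>_. 0) (pc a) A = (if En a \<in> A then Jv D a else 0)"
proof -
  assume fA: "finite A" "a \<in> F"
  have "cov D F (\<lambda>_. 0) (pc a) A = (\<Sum>l\<in>A. if l = En a then Jv D a else 0)"
    unfolding cov_def by (rule sum.cong) (use fA in \<open>auto simp: lc_def pc_def split: leaf.split\<close>)
  thus ?thesis using fA by (simp add: sum.delta')
qed
lemma cov_supp:
  assumes "\<forall>m. Mk m \<notin> I \<longrightarrow> wm m = 0" "\<forall>i. En i \<notin> I \<longrightarrow> cf i = 0" "finite A"
  shows "cov D F wm cf A = cov D F wm cf (A \<inter> I)"
proof -
  have "cov D F wm cf A = cov D F wm cf (A \<inter> I) + (\<Sum>l\<in>A - I. lc D F wm cf l)"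
    unfolding cov_def using assms(3) by (metis Diff_Diff_Int Diff_subset Int_commute sum.subset_diff)
  moreover have "(\<Sum>l\<in>A - I. lc D F wm cf l) = 0"
    by (rule sum.neutral) (use assms(1,2) in \<open>auto simp: lc_def split: leaf.split\<close>)
  ultimately show ?thesis by simp
qed
lemma cov_empty: "cov D F wm cf {} = 0" by (simp add: cov_def)





definition RFP :: "ivec list \<Rightarrow> nat set \<Rightarrow> leaf set set \<Rightarrow> leaf set \<Rightarrow> (nat \<Rightarrow> real \<times> real) \<Rightarrow> (nat \<Rightarrow> real) \<Rightarrow> bool" where
  "RFP D F Es' I wm cf \<longleftrightarrow> (\<forall>m. Mk m \<notin> I \<longrightarrow> wm m = 0) \<and> (\<forall>i. En i \<notin> I \<longrightarrow> cf i = 0) \<and>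
     cov D F wm cf I = Jr (srr D I) \<and> (\<forall>A\<in>Es'. A \<subseteq> I \<longrightarrow> dot (cov D F wm cf A) (srr D A) = 0)"

context curF begin

lemma sr_srr: "sr = srr D" by (rule ext) (simp add: sr_def srr_def)

lemma Es_not_sub1: "A \<in> Es \<Longrightarrow> \<not> A \<subseteq> {l}"
proof
  assume "A \<in> Es" "A \<subseteq> {l}"
  hence "card A \<le> card {l}" by (intro card_mono) auto
  thus False using Es_card[OF `A \<in> Es`] by simp
qed

lemma rigid_flow: "I \<in> items \<Longrightarrow> \<not> isMk I \<Longrightarrow> \<not> freeI I \<Longrightarrow> \<exists>wm cf. RFP D F Es I wm cf"
proof (induction "card I" arbitrary: I rule: less_induct)
  case less
  show ?case
  proof (cases "I \<in> Es")
    case False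
    then obtain l where l: "I = {l}" "l \<in> R" using less.prems(1) by (auto simp: items_def)
    then obtain i where i: "l = En i" using less.prems(2) by (cases l) (auto simp: isMk_def)
    have iF: "i \<in> F" using less.prems(3) l i free_En by simp
    have "RFP D F Es I (\<lambda>_. 0) (pc i)"
      unfolding RFP_def
    proof (intro conjI allI impI ballI)
      fix k assume "En k \<notin> I" thus "pc i k = 0" using l i by (auto simp: pc_def)
    next
      show "cov D F (\<lambda>_. 0) (pc i) I = Jr (srr D I)" using l i iF by (simp add: cov_pc Jv_Jr)
    next
      fix A assume "A \<in> Es" "A \<subseteq> I" thus "dot (cov D F (\<lambda>_. 0) (pc i) A) (srr D A) = 0"
        using Es_not_sub1 l by blast
    qed simp
    thus ?thesis by blast
  next
    case IE: True
    have IV: "I \<in> VS" using IE by (simp add: VS_def')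
    have fI: "finite I" using Es_fin[OF IE] .
    show ?thesis
    proof (cases "has_mark C I")
      case True
      then obtain m where m: "{Mk m} \<in> ch I" by (auto simp: has_mark_def)
      have mI: "Mk m \<in> I" using ch_psub[OF m] by blast
      have "RFP D F Es I (pm m (Jr (srr D I))) (\<lambda>_. 0)"
        unfolding RFP_def
      proof (intro conjI allI impI ballI)
        fix k assume "Mk k \<notin> I" thus "pm m (Jr (srr D I)) k = 0" using mI by (auto simp: pm_def)
      next
        show "cov D F (pm m (Jr (srr D I))) (\<lambda>_. 0) I = Jr (srr D I)" using fI mI by (simp add: cov_pm)
      next
        fix A assume A: "A \<in> Es" "A \<subseteq> I"
        show "dot (cov D F (pm m (Jr (srr D I))) (\<lambda>_. 0) A) (srr D A) = 0"
        proof (cases "Mk m \<in> A")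
          case True
          hence "I \<subseteq> A" using markA[OF IV m A(1)] by blast
          hence "A = I" using A by blast
          thus ?thesis using fI True by (simp add: cov_pm dot_Jr)
        next
          case False thus ?thesis using Es_fin[OF A(1)] by (simp add: cov_pm dot_zero)
        qed
      qed simp
      thus ?thesis by blast
    next
      case nm: False
      have chp: "\<forall>c\<in>ch I. \<exists>p. RFP D F Es c (fst p) (snd p)"
      proof
        fix c assume c: "c \<in> ch I"
        have ci: "c \<in> items" using ch_items[OF IV c] .
        have "\<not> isMk c" using nm c by (auto simp: has_mark_iff)
        moreover have "\<not> freeI c" using less.prems(3) free_rec[OF IE] nm c by blast
        moreover have "card c < card I" using ch_psub[OF c] fI by (simp add: psubset_card_mono)
        ultimately show "\<exists>p. RFP D F Es c (fst p) (snd p)" using less.hyps ci by auto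
      qed
      then obtain f where f: "\<forall>c\<in>ch I. RFP D F Es c (fst (f c)) (snd (f c))" by (metis bchoice)
      define W where "W c = fst (f c)" for c
      define CF where "CF c = snd (f c)" for c
      have Wc: "\<And>c. c \<in> ch I \<Longrightarrow> RFP D F Es c (W c) (CF c)" using f W_def CF_def by simp
      have finch: "finite (ch I)" using ch_fin[OF IV] .
      have supW: "\<And>c. c \<in> ch I \<Longrightarrow> cov D F (W c) (CF c) A = cov D F (W c) (CF c) (A \<inter> c)" if "finite A" for A
        using Wc that by (intro cov_supp) (auto simp: RFP_def)
      have covsum: "cov D F (\<lambda>m. \<Sum>c\<in>ch I. W c m) (\<lambda>i. \<Sum>c\<in>ch I. CF c i) A = (\<Sum>c\<in>ch I. cov D F (W c) (CF c) A)" for A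
        by (rule cov_sum[OF finch])
      have "RFP D F Es I (\<lambda>m. \<Sum>c\<in>ch I. W c m) (\<lambda>i. \<Sum>c\<in>ch I. CF c i)"
        unfolding RFP_def
      proof (intro conjI allI impI ballI)
        fix m assume "Mk m \<notin> I"
        hence "\<forall>c\<in>ch I. Mk m \<notin> c" using ch_psub by blast
        thus "(\<Sum>c\<in>ch I. W c m) = 0" using Wc by (auto simp: RFP_def intro: sum.neutral)
      next
        fix i assume "En i \<notin> I"
        hence "\<forall>c\<in>ch I. En i \<notin> c" using ch_psub by blast
        thus "(\<Sum>c\<in>ch I. CF c i) = 0" using Wc by (auto simp: RFP_def intro: sum.neutral)
      next
        have "(\<Sum>c\<in>ch I. cov D F (W c) (CF c) I) = (\<Sum>c\<in>ch I. Jr (srr D c))"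
        proof (rule sum.cong[OF refl])
          fix c assume c: "c \<in> ch I"
          have "I \<inter> c = c" using ch_psub[OF c] by blast
          thus "cov D F (W c) (CF c) I = Jr (srr D c)" using supW[OF fI c] Wc[OF c] by (simp add: RFP_def)
        qed
        also have "\<dots> = Jr (srr D I)" using sr_ch[OF IV] by (simp add: sr_srr Jr_sum)
        finally show "cov D F (\<lambda>m. \<Sum>c\<in>ch I. W c m) (\<lambda>i. \<Sum>c\<in>ch I. CF c i) I = Jr (srr D I)" by (simp add: covsum)
      next
        fix A assume A: "A \<in> Es" "A \<subseteq> I"
        show "dot (cov D F (\<lambda>m. \<Sum>c\<in>ch I. W c m) (\<lambda>i. \<Sum>c\<in>ch I. CF c i) A) (srr D A) = 0"
        proof (cases "A = I")
          case True
          have "cov D F (\<lambda>m. \<Sum>c\<in>ch I. W c m) (\<lambda>i. \<Sum>c\<in>ch I. CF c i) I = Jr (srr D I)"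
          proof -
            have "(\<Sum>c\<in>ch I. cov D F (W c) (CF c) I) = (\<Sum>c\<in>ch I. Jr (srr D c))"
            proof (rule sum.cong[OF refl])
              fix c assume c: "c \<in> ch I"
              have "I \<inter> c = c" using ch_psub[OF c] by blast
              thus "cov D F (W c) (CF c) I = Jr (srr D c)" using supW[OF fI c] Wc[OF c] by (simp add: RFP_def)
            qed
            also have "\<dots> = Jr (srr D I)" using sr_ch[OF IV] by (simp add: sr_srr Jr_sum)
            finally show ?thesis by (simp add: covsum)
          qed
          thus ?thesis using True by (simp add: dot_Jr)
        next
          case False
          hence "A \<subset> I" using A by blast
          moreover have "A \<in> items" using A(1) by (simp add: items_def)
          ultimately obtain c0 where c0: "c0 \<in> ch I" "A \<subseteq> c0" using sub_child[OF IV] by blast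
          have fA: "finite A" using Es_fin[OF A(1)] .
          have "(\<Sum>c\<in>ch I. cov D F (W c) (CF c) A) = cov D F (W c0) (CF c0) A + (\<Sum>c\<in>ch I - {c0}. cov D F (W c) (CF c) A)"
            using finch c0(1) by (simp add: sum.remove)
          moreover have "(\<Sum>c\<in>ch I - {c0}. cov D F (W c) (CF c) A) = 0"
          proof (rule sum.neutral, intro ballI)
            fix c assume c: "c \<in> ch I - {c0}"
            have "A \<inter> c = {}" using ch_disj[OF IV c0(1), of c] c c0(2) by blast
            thus "cov D F (W c) (CF c) A = 0" using supW[OF fA, of c] c by (simp add: cov_empty)
          qed
          ultimately have "cov D F (\<lambda>m. \<Sum>c\<in>ch I. W c m) (\<lambda>i. \<Sum>c\<in>ch I. CF c i) A = cov D F (W c0) (CF c0) A"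
            by (simp add: covsum)
          thus ?thesis using Wc[OF c0(1)] A(1) c0(2) by (simp add: RFP_def)
        qed
      qed
      thus ?thesis by blast
    qed
  qed
qed

end


lemma children_cong: assumes "edgesS C1 = edgesS C2" shows "children C1 = children C2"
  by (rule ext) (simp only: children_def assms)
lemma edges_at_cong: assumes "edgesS C1 = edgesS C2" shows "edges_at C1 = edges_at C2"
  by (rule ext) (simp only: edges_at_def children_cong[OF assms])
lemma noncontr_cong: assumes "edgesS C1 = edgesS C2" shows "noncontr_at D C1 = noncontr_at D C2"
  by (rule ext) (simp only: noncontr_at_def edges_at_cong[OF assms])
lemma marks_cong: assumes "edgesS C1 = edgesS C2" shows "has_real_mark r C1 = has_real_mark r C2 \<and>
   has_cplx_mark r s C1 = has_cplx_mark r s C2 \<and> has_mark C1 = has_mark C2"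
proof -
  have "has_real_mark r C1 = has_real_mark r C2" by (rule ext) (simp only: has_real_mark_def children_cong[OF assms])
  moreover have "has_cplx_mark r s C1 = has_cplx_mark r s C2" by (rule ext) (simp only: has_cplx_mark_def children_cong[OF assms])
  moreover have "has_mark C1 = has_mark C2" by (rule ext) (simp only: has_mark_def children_cong[OF assms])
  ultimately show ?thesis by blast
qed
lemma verts_cong: assumes "edgesS C1 = edgesS C2" shows "verts r s n C1 = verts r s n C2"
  by (simp only: verts_def assms)
lemma mik_cong: assumes "edgesS C1 = edgesS C2" shows "mik D C1 = mik D C2"
  by (rule ext) (simp only: mik_def noncontr_cong[OF assms])
lemma curve_data_cong: assumes "edgesS C1 = edgesS C2" shows "is_curve_data r s D C1 = is_curve_data r s D C2"
  by (simp only: is_curve_data_def assms)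

locale good = curF +
  assumes desc: "is_desc r s D C"
    and noTwo: "\<And>V a b. V \<in> VS \<Longrightarrow> {Mk a} \<in> ch V \<Longrightarrow> {Mk b} \<in> ch V \<Longrightarrow> a = b"
    and noContr: "\<And>A. A \<in> Es \<Longrightarrow> sigma D A \<noteq> (0,0)"
    and chcard: "\<And>V. V \<in> VS \<Longrightarrow> card (ch V) = 2 + cmcnt V"
    and Dv0: "\<And>V. V \<in> VS \<Longrightarrow> Dv V = 0"
begin

definition "Cp = ((\<lambda>A. if A \<in> Es \<and> rho A = 1 then - fst C A else fst C A), snd C)"

lemma Cnn: "fst C A \<ge> 0" using desc by (simp add: is_desc_def is_curve_def)
lemma Cpos: "A \<in> Es \<Longrightarrow> fst C A > 0" using Cnn[of A] by (simp add: edgesS_def)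
lemma edges_Cp: "edgesS Cp = Es" by (auto simp: edgesS_def Cp_def)
lemma abs_Cp: "((\<lambda>A. \<bar>fst Cp A\<bar>), snd Cp) = C"
proof -
  have "\<bar>fst Cp A\<bar> = fst C A" for A using Cnn[of A] by (simp add: Cp_def)
  thus ?thesis by (simp add: Cp_def)
qed

lemma up_Es: "E \<in> Es \<Longrightarrow> up r s D F Cp E \<longleftrightarrow> rho E = 1"
proof -
  assume E: "E \<in> Es"
  have "E \<noteq> R" using Es_neR[OF E] .
  moreover have "\<not> (\<exists>i. E = {En i})" using Es_ne1[OF E] by blast
  moreover have "(fst Cp E < 0) \<longleftrightarrow> rho E = 1" using Cpos[OF E] by (simp add: Cp_def E)
  ultimately show ?thesis by (simp add: up_def)
qed

lemma up_R: "up r s D F Cp R \<longleftrightarrow> rho R = 1"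
proof -
  have "\<not> isMk R"
  proof
    assume "isMk R" then obtain m where "R = {Mk m}" by (auto simp: isMk_def)
    hence "card R = 1" by simp
    thus False using cardR2 by simp
  qed
  thus ?thesis by (simp add: up_def rho_def)
qed

lemma up_En: "i \<noteq> 0 \<Longrightarrow> up r s D F Cp {En i} \<longleftrightarrow> rho {En i} = 1"
proof -
  assume "i \<noteq> 0"
  have "{En i} \<noteq> R"
  proof
    assume a: "{En i} = R"
    have "card {En i} = 1" by simp
    hence "card R = 1" unfolding a .
    thus False using cardR2 by simp
  qed
  moreover have "\<not> isMk {En i}" by (simp add: isMk_def)
  ultimately show ?thesis using free_En[of i] by (auto simp: up_def rho_def)
qed

lemma ch_nonmark: assumes "V \<in> VS" "c \<in> ch V" "\<not> isMk c"
  shows "c \<noteq> R" "sigma D c \<noteq> (0,0)" "up r s D F Cp c \<longleftrightarrow> rho c = 1" "c \<noteq> V"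
proof -
  have ci: "c \<in> items" using ch_items[OF assms(1,2)] .
  show cR: "c \<noteq> R" using items_neR[OF ci] .
  show "c \<noteq> V" using ch_psub[OF assms(2)] by blast
  have both: "sigma D c \<noteq> (0,0) \<and> (up r s D F Cp c \<longleftrightarrow> rho c = 1)"
  proof (cases "c \<in> Es")
    case True thus ?thesis using noContr up_Es by blast
  next
    case False
    then obtain l where l: "c = {l}" "l \<in> R" using ci by (auto simp: items_def)
    then obtain i where i: "l = En i" using assms(3) by (cases l) (auto simp: isMk_def)
    have "i < n" "i \<noteq> 0" using l(2) i En0_notin_R by (auto simp: R_def' leaves_def)
    thus ?thesis using l i sigma_En D_nz up_En by auto
  qed
  show "sigma D c \<noteq> (0,0)" "up r s D F Cp c \<longleftrightarrow> rho c = 1" using both by auto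
qed

lemma mark_sigma: "isMk c \<Longrightarrow> sigma D c = (0,0)" by (auto simp: isMk_def sigma_Mk)

lemma V_sigma: "V \<in> VS \<Longrightarrow> sigma D V \<noteq> (0,0)"
  using noContr sigma_R_nz by (auto simp: VS_def')

lemma up_V: "V \<in> VS \<Longrightarrow> up r s D F Cp V \<longleftrightarrow> rho V = 1"
  using up_Es up_R by (auto simp: VS_def')

lemma mcnt_le1: assumes "V \<in> VS" shows "mcnt V \<le> 1"
proof -
  have "{c\<in>ch V. isMk c} \<subseteq> {c. \<exists>m. c = {Mk m}} \<inter> ch V" by (auto simp: isMk_def)
  have fin: "finite {c\<in>ch V. isMk c}" using ch_fin[OF assms] by simp
  have "\<forall>x\<in>{c\<in>ch V. isMk c}. \<forall>y\<in>{c\<in>ch V. isMk c}. x = y"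
    using noTwo[OF assms] by (auto simp: isMk_def)
  hence "card {c\<in>ch V. isMk c} \<le> Suc 0" using card_le_Suc0_iff_eq[OF fin] by blast
  thus ?thesis by (simp add: mcnt_def)
qed

lemma cm_le_m: assumes "V \<in> VS" shows "cmcnt V \<le> mcnt V"
  unfolding cmcnt_def mcnt_def by (rule card_mono) (auto simp: ch_fin[OF assms] isCMk_def isMk_def)

lemma Cp_vertex: assumes V: "V \<in> VS"
  shows "typeI r s D F Cp V \<or> typeII r s D F Cp V \<or> typeIII r s D F Cp V"
proof -
  have ee: "edgesS Cp = edgesS C" by (simp add: edges_Cp)
  have chC: "children Cp = ch" by (rule children_cong[OF ee])
  have eaC: "edges_at Cp = edges_at C" by (rule edges_at_cong[OF ee])
  have ncC: "noncontr_at D Cp = noncontr_at D C" by (rule noncontr_cong[OF ee])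
  have mkC: "has_real_mark r Cp = has_real_mark r C" "has_cplx_mark r s Cp = has_cplx_mark r s C" "has_mark Cp = has_mark C"
    using marks_cong[OF ee] by auto
  have finch: "finite (ch V)" using ch_fin[OF V] .
  have Vnot: "V \<notin> ch V" using ch_psub by blast
  have cardEA: "card (edges_at C V) = card (ch V) + 1" using finch Vnot by (simp add: edges_at_def)
  define NM where "NM = {c\<in>ch V. \<not> isMk c}"
  have NC: "noncontr_at D C V = insert V NM"
    using V_sigma[OF V] ch_nonmark[OF V] mark_sigma by (auto simp: noncontr_at_def edges_at_def NM_def)
  have finNM: "finite NM" using finch by (simp add: NM_def)
  have VNM: "V \<notin> NM" using Vnot by (simp add: NM_def)
  have cardNM: "int (card NM) = int (card (ch V)) - int (mcnt V)"
  proof -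
    have "ch V = NM \<union> {c\<in>ch V. isMk c}" by (auto simp: NM_def)
    moreover have "NM \<inter> {c\<in>ch V. isMk c} = {}" by (auto simp: NM_def)
    ultimately have "card (ch V) = card NM + mcnt V" using finch unfolding mcnt_def
      by (metis (no_types, lifting) card_Un_disjoint finite_Un)
    thus ?thesis by simp
  qed
  have cardNC: "card (noncontr_at D C V) = card NM + 1" using NC finNM VNM by simp
  define OUT where "OUT = {E \<in> noncontr_at D C V. outgoing r s D F Cp V E}"
  define Z where "Z = {c\<in>NM. rho c = 0}"
  have OUT_eq: "OUT = (if rho V = 1 then insert V Z else Z)"
  proof -
    have "outgoing r s D F Cp V V \<longleftrightarrow> rho V = 1" using up_V[OF V] Vnot by (simp add: outgoing_def chC)
    moreover have "outgoing r s D F Cp V c \<longleftrightarrow> rho c = 0" if "c \<in> NM" for c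
    proof -
      have c: "c \<in> ch V" "\<not> isMk c" using that by (auto simp: NM_def)
      have "c \<noteq> V" using ch_nonmark(4)[OF V c] .
      thus ?thesis using ch_nonmark(3)[OF V c] c(1) rho01[of c] by (auto simp: outgoing_def chC)
    qed
    ultimately show ?thesis unfolding OUT_def NC Z_def by auto
  qed
  have finZ: "finite Z" using finNM by (simp add: Z_def)
  have VZ: "V \<notin> Z" using VNM by (simp add: Z_def)
  have sumrho: "(\<Sum>c\<in>ch V. rho c) = int (card NM) - int (card Z)"
  proof -
    have "(\<Sum>c\<in>ch V. rho c) = (\<Sum>c\<in>ch V. (if c \<in> NM then 1 else 0) - (if c \<in> Z then 1 else 0))"
    proof (rule sum.cong[OF refl])
      fix c assume c: "c \<in> ch V"
      show "rho c = (if c \<in> NM then 1 else 0) - (if c \<in> Z then 1 else 0)"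
        using rho01[of c] c by (auto simp: NM_def Z_def rho_def)
    qed
    also have "\<dots> = int (card {c\<in>ch V. c \<in> NM}) - int (card {c\<in>ch V. c \<in> Z})"
      by (simp add: sum_subtractf sum_ind[OF finch])
    also have "{c\<in>ch V. c \<in> NM} = NM" by (auto simp: NM_def)
    also have "{c\<in>ch V. c \<in> Z} = Z" by (auto simp: NM_def Z_def)
    finally show ?thesis .
  qed
  have cardOUT: "int (card OUT) = rho V + int (card Z)"
    using OUT_eq finZ VZ rho01[of V] by auto
  have DvV: "rho V - (\<Sum>c\<in>ch V. rho c) + 1 - 2 * int (mcnt V) = 0" using Dv0[OF V] by (simp add: Dv_def)
  have OUTcard: "int (card OUT) = int (card (ch V)) + int (mcnt V) - 1"
    using cardOUT sumrho cardNM DvV by simp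
  have OUTsub: "OUT \<subseteq> noncontr_at D C V" by (auto simp: OUT_def)
  have finNC: "finite (noncontr_at D C V)" using NC finNM by simp
  have m1: "mcnt V \<le> 1" using mcnt_le1[OF V] .
  have cm: "cmcnt V \<le> mcnt V" using cm_le_m[OF V] .
  have chc: "card (ch V) = 2 + cmcnt V" using chcard[OF V] .
  show ?thesis
  proof (cases "mcnt V = 0")
    case True
    hence nm: "\<not> has_mark C V"
    proof -
      have "{c\<in>ch V. isMk c} = {}" using True finch by (simp add: mcnt_def)
      thus ?thesis by (auto simp: has_mark_iff)
    qed
    have "cmcnt V = 0" using True cm by simp
    hence "card (ch V) = 2" using chc by simp
    hence "card (edges_at C V) = 3" "card (noncontr_at D C V) = 3" "card OUT = 1"
      using cardEA cardNC cardNM True OUTcard by auto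
    hence "typeII r s D F Cp V" using nm by (simp add: typeII_def mkC eaC ncC OUT_def)
    thus ?thesis by blast
  next
    case False
    hence m: "mcnt V = 1" using m1 by simp
    then obtain c where c: "c \<in> ch V" "isMk c" unfolding mcnt_def by (metis (mono_tags, lifting) card_1_singletonE mem_Collect_eq singletonI)
    then obtain a where a: "c = {Mk a}" by (auto simp: isMk_def)
    have aR: "a < r + s" using ch_psub[OF c(1)] VS_sub[OF V] a by (auto simp: R_def' leaves_def)
    have allout: "\<forall>E\<in>noncontr_at D C V. outgoing r s D F Cp V E"
      if "card OUT = card (noncontr_at D C V)"
    proof -
      have "OUT = noncontr_at D C V" using card_subset_eq[OF finNC OUTsub that] .
      thus ?thesis by (auto simp: OUT_def)
    qed
    show ?thesis
    proof (cases "cmcnt V = 0")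
      case True
      have "card (ch V) = 2" using chc True by simp
      hence cards: "card (edges_at C V) = 3" "card (noncontr_at D C V) = 2" "card OUT = 2"
        using cardEA cardNC cardNM m OUTcard by auto
      have "\<not> isCMk c"
      proof
        assume "isCMk c"
        hence "c \<in> {c\<in>ch V. isCMk c}" using c by simp
        hence "cmcnt V \<noteq> 0" using finch unfolding cmcnt_def by auto
        thus False using True by simp
      qed
      hence "a < r" using a aR by (auto simp: isCMk_def)
      hence "has_real_mark r C V" using c a by (auto simp: has_real_iff)
      hence "typeI r s D F Cp V" using cards allout by (simp add: typeI_def mkC eaC ncC)
      thus ?thesis by blast
    next
      case False
      hence "cmcnt V = 1" using cm m by simp
      hence "card (ch V) = 3" using chc by simp
      hence cards: "card (edges_at C V) = 4" "card (noncontr_at D C V) = 3" "card OUT = 3"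
        using cardEA cardNC cardNM m OUTcard by auto
      have "has_cplx_mark r s C V"
      proof -
        have "{c\<in>ch V. isCMk c} \<noteq> {}" using False finch unfolding cmcnt_def by (metis card.empty)
        thus ?thesis by (auto simp: has_cplx_iff)
      qed
      hence "typeIII r s D F Cp V" using cards allout by (simp add: typeIII_def mkC eaC ncC)
      thus ?thesis by blast
    qed
  qed
qed

lemma Cp_rB: "is_rbroccoli r s D F Cp"
proof -
  have ee: "edgesS Cp = edgesS C" by (simp add: edges_Cp)
  have "is_curve_data r s D Cp" using cd curve_data_cong[OF ee] by simp
  moreover have "\<forall>A. sigma D A = (0,0) \<longrightarrow> fst Cp A \<ge> 0"
  proof (intro allI impI)
    fix A assume "sigma D A = (0,0)"
    hence "A \<notin> Es" using noContr by blast
    thus "fst Cp A \<ge> 0" using Cnn[of A] by (simp add: Cp_def)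
  qed
  ultimately have "is_or_curve r s D Cp" by (simp add: is_or_curve_def)
  moreover have "verts r s n Cp = VS" by (rule verts_cong[OF ee])
  ultimately show ?thesis using Cp_vertex by (simp add: is_rbroccoli_def)
qed

end


context curF begin

lemma RFP_supp: "RFP D F Es c wm cf \<Longrightarrow> finite A \<Longrightarrow> cov D F wm cf A = cov D F wm cf (A \<inter> c)"
  by (rule cov_supp) (auto simp: RFP_def)

lemma sum_cov_in:
  assumes V: "V \<in> VS" and W: "\<forall>c\<in>ch V. RFP D F Es c (W c) (CF c)" and fA: "finite A"
    and c0: "c0 \<in> ch V" "A \<subseteq> c0"
  shows "(\<Sum>c\<in>ch V. cov D F (W c) (CF c) A) = cov D F (W c0) (CF c0) A"
proof -
  have "(\<Sum>c\<in>ch V. cov D F (W c) (CF c) A) = cov D F (W c0) (CF c0) A + (\<Sum>c\<in>ch V - {c0}. cov D F (W c) (CF c) A)"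
    using ch_fin[OF V] c0(1) by (simp add: sum.remove)
  moreover have "(\<Sum>c\<in>ch V - {c0}. cov D F (W c) (CF c) A) = 0"
  proof (rule sum.neutral, intro ballI)
    fix c assume c: "c \<in> ch V - {c0}"
    have "A \<inter> c = {}" using ch_disj[OF V c0(1), of c] c c0(2) by blast
    thus "cov D F (W c) (CF c) A = 0" using RFP_supp[OF _ fA, of c "W c" "CF c"] W c by (simp add: cov_empty)
  qed
  ultimately show ?thesis by simp
qed

lemma sum_cov_full:
  assumes V: "V \<in> VS" and W: "\<forall>c\<in>ch V. RFP D F Es c (W c) (CF c)" and fA: "finite A" and VA: "V \<subseteq> A"
  shows "(\<Sum>c\<in>ch V. cov D F (W c) (CF c) A) = Jr (srr D V)"
proof -
  have "(\<Sum>c\<in>ch V. cov D F (W c) (CF c) A) = (\<Sum>c\<in>ch V. Jr (srr D c))"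
  proof (rule sum.cong[OF refl])
    fix c assume c: "c \<in> ch V"
    have "A \<inter> c = c" using ch_psub[OF c] VA by blast
    thus "cov D F (W c) (CF c) A = Jr (srr D c)" using RFP_supp[OF _ fA, of c "W c" "CF c"] W c by (simp add: RFP_def)
  qed
  also have "\<dots> = Jr (srr D V)" using sr_ch[OF V] by (simp add: sr_srr Jr_sum)
  finally show ?thesis .
qed

lemma srr_nz: "sigma D A \<noteq> (0,0) \<Longrightarrow> srr D A \<noteq> 0"
  by (auto simp: srr_def zero_prod_def prod_eq_iff)

lemma Jr_coord: "x \<noteq> 0 \<Longrightarrow> fst (Jr x) \<noteq> 0 \<or> snd (Jr x) \<noteq> 0"
  using Jr_nz[of x] by (cases "Jr x") (auto simp: zero_prod_def)

end

locale ns = curF +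
  assumes desc: "is_desc r s D C"
    and dim: "r + 2 * s + card F + 1 = length D"
    and NS: "\<And>S. finite S \<Longrightarrow> gA r s D F ` Es \<union> {e1 r s D F, e2 r s D F} \<subseteq> fv.span S \<Longrightarrow> 2 * (r + s) + card F \<le> card S"
begin

lemma Es_Lv: "A \<in> Es \<Longrightarrow> A \<subseteq> Lv" using Es_sub R_sub by blast

lemma noLam:
  assumes "\<forall>A\<in>Es. dot (cov D F wm cf A) (srr D A) = 0" "cov D F wm cf Lv = 0"
    "j0 \<in> Jset r s F" "lamf wm cf j0 \<noteq> 0"
  shows False
proof -
  have "\<forall>A\<in>Es. A \<subseteq> Lv \<and> dot (cov D F wm cf A) (srr D A) = 0" using assms(1) Es_Lv by blast
  from lam_kill[OF finF Fsub this assms(2-4)] obtain S where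
    "finite S" "card S < 2 * (r + s) + card F" "gA r s D F ` Es \<union> {e1 r s D F, e2 r s D F} \<subseteq> fv.span S" by blast
  thus False using NS by fastforce
qed

lemma mk_lt: "V \<in> VS \<Longrightarrow> {Mk a} \<in> ch V \<Longrightarrow> a < r + s"
  using ch_psub VS_sub by (fastforce simp: R_def' leaves_def)

lemma PX_J: "a < r + s \<Longrightarrow> PX a \<in> Jset r s F" by (simp add: Jset_def)
lemma PY_J: "a < r + s \<Longrightarrow> PY a \<in> Jset r s F" by (simp add: Jset_def)

lemma noTwo: assumes V: "V \<in> VS" and a: "{Mk a} \<in> ch V" and b: "{Mk b} \<in> ch V" shows "a = b"
proof (rule ccontr)
  assume ab: "a \<noteq> b"
  let ?wm = "\<lambda>m. pm a (1,0) m + pm b (-1,0) m" and ?cf = "\<lambda>i::nat. (0::real) + 0"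
  have cv: "cov D F ?wm ?cf A = (if Mk a \<in> A then (1,0) else 0) + (if Mk b \<in> A then (-1,0) else 0)" if "finite A" for A
    using cov_add[of D F "pm a (1,0)" "pm b (-1,0)" "\<lambda>_. 0" "\<lambda>_. 0" A] cov_pm[OF that] by simp
  have "\<forall>A\<in>Es. dot (cov D F ?wm ?cf A) (srr D A) = 0"
  proof
    fix A assume A: "A \<in> Es"
    have "Mk a \<in> A \<longleftrightarrow> Mk b \<in> A" using markA[OF V a A] markA[OF V b A] by simp
    thus "dot (cov D F ?wm ?cf A) (srr D A) = 0" using cv[OF Es_fin[OF A]] by (auto simp: dot_def)
  qed
  moreover have "cov D F ?wm ?cf Lv = 0"
  proof -
    have "Mk a \<in> Lv" "Mk b \<in> Lv" using ch_psub[OF a] ch_psub[OF b] VS_sub[OF V] R_sub by blast+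
    thus ?thesis using cv[OF finite_leaves] by (simp add: zero_prod_def)
  qed
  moreover have "lamf ?wm ?cf (PX a) \<noteq> 0" using ab by (simp add: lamf_def pm_def)
  ultimately show False using noLam PX_J[OF mk_lt[OF V a]] by blast
qed

lemma mcnt_le1: assumes "V \<in> VS" shows "mcnt V \<le> 1"
proof -
  have fin: "finite {c\<in>ch V. isMk c}" using ch_fin[OF assms] by simp
  have "\<forall>x\<in>{c\<in>ch V. isMk c}. \<forall>y\<in>{c\<in>ch V. isMk c}. x = y"
    using noTwo[OF assms] by (auto simp: isMk_def)
  hence "card {c\<in>ch V. isMk c} \<le> Suc 0" using card_le_Suc0_iff_eq[OF fin] by blast
  thus ?thesis by (simp add: mcnt_def)
qed

lemma cm_le_m: assumes "V \<in> VS" shows "cmcnt V \<le> mcnt V"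
  unfolding cmcnt_def mcnt_def by (rule card_mono) (auto simp: ch_fin[OF assms] isCMk_def isMk_def)

definition ex :: "leaf set \<Rightarrow> int" where "ex V = int (card (ch V)) - 2 - int (cmcnt V)"

lemma ex_nonneg: assumes V: "V \<in> VS" shows "ex V \<ge> 0"
proof (cases "cmcnt V = 0")
  case True thus ?thesis using ch_card2[OF V] by (simp add: ex_def)
next
  case False
  hence c1: "cmcnt V = 1" using cm_le_m[OF V] mcnt_le1[OF V] by simp
  have "{c\<in>ch V. isCMk c} \<noteq> {}" using False by (metis card.empty cmcnt_def)
  then obtain i where i: "r \<le> i" "i < r + s" "{Mk i} \<in> ch V" by (auto simp: isCMk_def)
  have "card (edges_at C V) = 4" using desc i V by (simp add: is_desc_def)
  moreover have "card (edges_at C V) = card (ch V) + 1"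
  proof -
    have "V \<notin> ch V" using ch_psub by blast
    thus ?thesis using ch_fin[OF V] by (simp add: edges_at_def)
  qed
  ultimately show ?thesis using c1 by (simp add: ex_def)
qed

lemma sum_ex: "(\<Sum>V\<in>VS. ex V) = int (2 * (r + s) + card F) - 2 - int (card Es)"
proof -
  have "(\<Sum>V\<in>VS. ex V) = (\<Sum>V\<in>VS. int (card (ch V))) - 2 * int (card VS) - (\<Sum>V\<in>VS. int (cmcnt V))"
    by (simp add: ex_def sum_subtractf)
  also have "\<dots> = int (card Es) + int (card R) - 2 * int (card Es + 1) - int s"
    using sum_card_ch sum_cmcnt cardVS by simp
  also have "card R = r + s + n - 1" using cardR card_leaves[of r s n] by simp
  finally show ?thesis using dim npos by simp
qed

lemma Es_bound: "card Es + 2 \<le> 2 * (r + s) + card F"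
proof -
  have "(\<Sum>V\<in>VS. ex V) \<ge> 0" using ex_nonneg by (simp add: sum_nonneg)
  thus ?thesis using sum_ex by simp
qed

lemma card_S0: "card (gA r s D F ` Es \<union> {e1 r s D F, e2 r s D F}) \<le> card Es + 2"
proof -
  have "card (gA r s D F ` Es \<union> {e1 r s D F, e2 r s D F}) \<le> card (gA r s D F ` Es) + card {e1 r s D F, e2 r s D F}"
    by (rule card_Un_le)
  also have "card (gA r s D F ` Es) \<le> card Es" by (rule card_image_le[OF finEs])
  also have "card {e1 r s D F, e2 r s D F} \<le> 2" by (simp add: card_insert_le_m1)
  finally show ?thesis by simp
qed

lemma ex_zero: "V \<in> VS \<Longrightarrow> ex V = 0"
proof -
  assume V: "V \<in> VS"
  have "(\<Sum>V\<in>VS. ex V) = 0"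
  proof (rule ccontr)
    assume "(\<Sum>V\<in>VS. ex V) \<noteq> 0"
    hence "(\<Sum>V\<in>VS. ex V) > 0" using ex_nonneg by (simp add: sum_nonneg order_le_neq_trans)
    hence lt: "card Es + 2 < 2 * (r + s) + card F" using sum_ex by simp
    let ?S = "gA r s D F ` Es \<union> {e1 r s D F, e2 r s D F}"
    have "?S \<subseteq> fv.span ?S" by (rule fv.span_superset)
    from NS[OF _ this] have "2 * (r + s) + card F \<le> card ?S" using finEs by simp
    thus False using card_S0 lt by simp
  qed
  thus ?thesis using sum_nonneg_eq_0_iff[OF finVS] ex_nonneg V by blast
qed

lemma chcard: "V \<in> VS \<Longrightarrow> card (ch V) = 2 + cmcnt V"
  using ex_zero[of V] by (simp add: ex_def)

lemma noContr: assumes A: "A \<in> Es" shows "sigma D A \<noteq> (0,0)"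
proof
  assume sA: "sigma D A = (0,0)"
  have g0: "gA r s D F A = 0" using sA by (auto simp: gA_def fun_eq_iff split: evidx.split)
  let ?S = "gA r s D F ` (Es - {A}) \<union> {e1 r s D F, e2 r s D F}"
  have "gA r s D F ` Es \<union> {e1 r s D F, e2 r s D F} \<subseteq> fv.span ?S"
  proof
    fix x assume x: "x \<in> gA r s D F ` Es \<union> {e1 r s D F, e2 r s D F}"
    have "gA r s D F A \<in> fv.span ?S" using g0 fv.span_zero by simp
    thus "x \<in> fv.span ?S"
    proof (cases "x = gA r s D F A")
      case False
      hence "x \<in> ?S" using x by blast
      thus ?thesis by (rule fv.span_base)
    qed simp
  qed
  from NS[OF _ this] have "2 * (r + s) + card F \<le> card ?S" using finEs by simp
  moreover have "card ?S \<le> card Es + 1"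
  proof -
    have "card ?S \<le> card (gA r s D F ` (Es - {A})) + card {e1 r s D F, e2 r s D F}" by (rule card_Un_le)
    also have "card (gA r s D F ` (Es - {A})) \<le> card (Es - {A})" by (rule card_image_le) (simp add: finEs)
    also have "card (Es - {A}) = card Es - 1" using A finEs by simp
    also have "card {e1 r s D F, e2 r s D F} \<le> 2" by (simp add: card_insert_le_m1)
    finally have "card ?S \<le> card Es - 1 + 2" by simp
    moreover have "0 < card Es" using A finEs card_gt_0_iff by blast
    ultimately show ?thesis by linarith
  qed
  ultimately show False using Es_bound by simp
qed


lemma nonmark_sigma: assumes V: "V \<in> VS" and c: "c \<in> ch V" "\<not> isMk c" shows "sigma D c \<noteq> (0,0)"
proof (cases "c \<in> Es")
  case True thus ?thesis using noContr by blast
next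
  case False
  have ci: "c \<in> items" using ch_items[OF V c(1)] .
  then obtain l where l: "c = {l}" "l \<in> R" using False by (auto simp: items_def)
  then obtain i where i: "l = En i" using c(2) by (cases l) (auto simp: isMk_def)
  have "i < n" using l(2) i by (auto simp: R_def' leaves_def)
  thus ?thesis using l i sigma_En D_nz by auto
qed

lemma rho_item: "c \<in> items \<Longrightarrow> \<not> isMk c \<Longrightarrow> rho c = (if freeI c then 0 else 1)"
  using items_neR by (simp add: rho_def)

lemma d1: assumes V: "V \<in> VS" and m: "{Mk m} \<in> ch V" and c0: "c0 \<in> ch V" "\<not> isMk c0" "\<not> freeI c0"
  shows False
proof -
  have c0i: "c0 \<in> items" using ch_items[OF V c0(1)] .
  obtain wm0 cf0 where R0: "RFP D F Es c0 wm0 cf0" using rigid_flow[OF c0i c0(2,3)] by blast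
  define x where "x = Jr (srr D c0)"
  have xnz: "x \<noteq> 0" unfolding x_def by (rule Jr_nz[OF srr_nz[OF nonmark_sigma[OF V c0(1,2)]]])
  have mc0: "Mk m \<notin> c0"
  proof -
    have "{Mk m} \<noteq> c0" using c0(2) by (auto simp: isMk_def)
    thus ?thesis using ch_disj[OF V m c0(1)] by blast
  qed
  let ?wm = "\<lambda>k. wm0 k + pm m (- x) k" and ?cf = "\<lambda>i. cf0 i + 0"
  have cv: "cov D F ?wm ?cf A = cov D F wm0 cf0 (A \<inter> c0) + (if Mk m \<in> A then - x else 0)" if fA: "finite A" for A
  proof -
    have "cov D F ?wm ?cf A = cov D F wm0 cf0 A + cov D F (pm m (- x)) (\<lambda>_. 0) A"
      using cov_add[of D F wm0 "pm m (- x)" cf0 "\<lambda>_. 0" A] by simp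
    thus ?thesis using cov_pm[OF fA] RFP_supp[OF R0 fA] by simp
  qed
  have cc0: "cov D F wm0 cf0 c0 = x" using R0 by (simp add: RFP_def x_def)
  have "\<forall>A\<in>Es. dot (cov D F ?wm ?cf A) (srr D A) = 0"
  proof
    fix A assume A: "A \<in> Es"
    have fA: "finite A" using Es_fin[OF A] .
    consider "A \<subseteq> c0" | "V \<subseteq> A" | "A \<inter> c0 = {}" using child_rel[OF V c0(1) A] by blast
    thus "dot (cov D F ?wm ?cf A) (srr D A) = 0"
    proof cases
      case 1
      hence "Mk m \<notin> A" "A \<inter> c0 = A" using mc0 by auto
      thus ?thesis using cv[OF fA] R0 A 1 by (simp add: RFP_def)
    next
      case 2
      hence "Mk m \<in> A" "A \<inter> c0 = c0" using ch_psub[OF m] ch_psub[OF c0(1)] by auto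
      thus ?thesis using cv[OF fA] cc0 by (simp add: dot_zero)
    next
      case 3
      have "Mk m \<notin> A"
      proof
        assume "Mk m \<in> A"
        hence "V \<subseteq> A" using markA[OF V m A] by simp
        hence "c0 \<subseteq> A" using ch_psub[OF c0(1)] by blast
        thus False using 3 items_ne[OF c0i] by blast
      qed
      thus ?thesis using cv[OF fA] 3 by (simp add: cov_empty dot_zero)
    qed
  qed
  moreover have "cov D F ?wm ?cf Lv = 0"
  proof -
    have "Lv \<inter> c0 = c0" using ch_psub[OF c0(1)] VS_sub[OF V] R_sub by blast
    moreover have "Mk m \<in> Lv" using ch_psub[OF m] VS_sub[OF V] R_sub by blast
    ultimately show ?thesis using cv[OF finite_leaves] cc0 by simp
  qed
  moreover have "wm0 m = 0" using R0 mc0 by (simp add: RFP_def)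
  moreover have "fst x \<noteq> 0 \<or> snd x \<noteq> 0" using xnz by (cases x) (auto simp: zero_prod_def)
  moreover have "lamf ?wm ?cf (PX m) \<noteq> 0 \<or> lamf ?wm ?cf (PY m) \<noteq> 0"
    using calculation(4) `wm0 m = 0` by (auto simp: lamf_def pm_def)
  ultimately show False using noLam PX_J[OF mk_lt[OF V m]] PY_J[OF mk_lt[OF V m]] by blast
qed

lemma RVS: "R \<in> VS" by (simp add: VS_def')

lemma d2: assumes m: "{Mk m} \<in> ch R" and F0: "0 \<in> F" shows False
proof -
  let ?wm = "\<lambda>k. pm m (- Jv D 0) k + 0" and ?cf = "\<lambda>i. 0 + pc 0 i"
  have cv: "cov D F ?wm ?cf A = (if Mk m \<in> A then - Jv D 0 else 0) + (if En 0 \<in> A then Jv D 0 else 0)" if fA: "finite A" for A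
  proof -
    have "cov D F ?wm ?cf A = cov D F (pm m (- Jv D 0)) (\<lambda>_. 0) A + cov D F (\<lambda>_. 0) (pc 0) A"
      using cov_add[of D F "pm m (- Jv D 0)" "\<lambda>_. 0" "\<lambda>_. 0" "pc 0" A] by simp
    thus ?thesis using cov_pm[OF fA] cov_pc[OF fA F0] by simp
  qed
  have "\<forall>A\<in>Es. dot (cov D F ?wm ?cf A) (srr D A) = 0"
  proof
    fix A assume A: "A \<in> Es"
    have "Mk m \<notin> A"
    proof
      assume "Mk m \<in> A" hence "R \<subseteq> A" using markA[OF RVS m A] by simp
      thus False using Es_psub[OF A] by blast
    qed
    moreover have "En 0 \<notin> A" using Es_sub[OF A] En0_notin_R by blast
    ultimately show "dot (cov D F ?wm ?cf A) (srr D A) = 0" using cv[OF Es_fin[OF A]] by (simp add: dot_zero)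
  qed
  moreover have "cov D F ?wm ?cf Lv = 0"
  proof -
    have "Mk m \<in> Lv" using ch_psub[OF m] R_sub by blast
    thus ?thesis using cv[OF finite_leaves] En0 by simp
  qed
  moreover have "FL 0 \<in> Jset r s F" using F0 by (simp add: Jset_def)
  moreover have "lamf ?wm ?cf (FL 0) \<noteq> 0" by (simp add: lamf_def pc_def)
  ultimately show False using noLam by blast
qed

lemma d3: assumes allc: "\<forall>c\<in>ch R. \<not> isMk c \<and> \<not> freeI c" and F0: "0 \<in> F" shows False
proof -
  have "\<forall>c\<in>ch R. \<exists>p. RFP D F Es c (fst p) (snd p)"
  proof
    fix c assume c: "c \<in> ch R"
    from rigid_flow[OF ch_items[OF RVS c]] allc c show "\<exists>p. RFP D F Es c (fst p) (snd p)" by auto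
  qed
  then obtain f where f: "\<forall>c\<in>ch R. RFP D F Es c (fst (f c)) (snd (f c))" by (metis bchoice)
  define W where "W c = fst (f c)" for c
  define CF where "CF c = snd (f c)" for c
  have Wc: "\<forall>c\<in>ch R. RFP D F Es c (W c) (CF c)" using f W_def CF_def by simp
  have finch: "finite (ch R)" using ch_fin[OF RVS] .
  let ?wm = "\<lambda>k. (\<Sum>c\<in>ch R. W c k) + 0" and ?cf = "\<lambda>i. (\<Sum>c\<in>ch R. CF c i) + pc 0 i"
  have cv: "cov D F ?wm ?cf A = (\<Sum>c\<in>ch R. cov D F (W c) (CF c) A) + (if En 0 \<in> A then Jv D 0 else 0)" if fA: "finite A" for A
  proof -
    have "cov D F ?wm ?cf A = cov D F (\<lambda>k. \<Sum>c\<in>ch R. W c k) (\<lambda>i. \<Sum>c\<in>ch R. CF c i) A + cov D F (\<lambda>_. 0) (pc 0) A"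
      using cov_add[of D F "\<lambda>k. \<Sum>c\<in>ch R. W c k" "\<lambda>_. 0" "\<lambda>i. \<Sum>c\<in>ch R. CF c i" "pc 0" A] by simp
    thus ?thesis using cov_sum[OF finch, of D F W CF A] cov_pc[OF fA F0] by simp
  qed
  have "\<forall>A\<in>Es. dot (cov D F ?wm ?cf A) (srr D A) = 0"
  proof
    fix A assume A: "A \<in> Es"
    have fA: "finite A" using Es_fin[OF A] .
    have "A \<in> items" using A by (simp add: items_def)
    then obtain c0 where c0: "c0 \<in> ch R" "A \<subseteq> c0" using sub_child[OF RVS _ Es_psub[OF A]] by blast
    have "En 0 \<notin> A" using Es_sub[OF A] En0_notin_R by blast
    hence "cov D F ?wm ?cf A = cov D F (W c0) (CF c0) A" using cv[OF fA] sum_cov_in[OF RVS Wc fA c0] by simp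
    thus "dot (cov D F ?wm ?cf A) (srr D A) = 0" using Wc c0 A by (simp add: RFP_def)
  qed
  moreover have "cov D F ?wm ?cf Lv = 0"
  proof -
    have "cov D F ?wm ?cf Lv = Jr (srr D R) + Jv D 0"
      using cv[OF finite_leaves] sum_cov_full[OF RVS Wc finite_leaves R_sub] En0 by simp
    also have "\<dots> = Jr (srr D R + srr D {En 0})" by (simp add: Jv_Jr Jr_add)
    also have "srr D R + srr D {En 0} = 0" by (simp add: srr_def sigma_R sigma_En zero_prod_def)
    finally show ?thesis by (simp add: Jr_def zero_prod_def)
  qed
  moreover have "FL 0 \<in> Jset r s F" using F0 by (simp add: Jset_def)
  moreover have "lamf ?wm ?cf (FL 0) \<noteq> 0"
  proof -
    have "\<forall>c\<in>ch R. CF c 0 = 0"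
    proof
      fix c assume c: "c \<in> ch R"
      have "En 0 \<notin> c" using ch_psub[OF c] En0_notin_R by blast
      thus "CF c 0 = 0" using Wc c by (simp add: RFP_def)
    qed
    thus ?thesis by (simp add: lamf_def pc_def)
  qed
  ultimately show False using noLam by blast
qed

lemma notMkR: "\<not> isMk R"
proof
  assume "isMk R" then obtain m where "R = {Mk m}" by (auto simp: isMk_def)
  hence "card R = 1" by simp
  thus False using cardR2 by simp
qed

lemma Dv_nonneg: assumes V: "V \<in> VS" shows "Dv V \<ge> 0"
proof -
  have finch: "finite (ch V)" using ch_fin[OF V] .
  have rho_le: "\<And>c. rho c \<le> 1" "\<And>c. rho c \<ge> 0" using rho01 by (metis order_refl zero_le_one)+
  show ?thesis
  proof (cases "mcnt V = 0")
    case False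
    hence m1: "mcnt V = 1" using mcnt_le1[OF V] by simp
    then obtain c where c: "c \<in> ch V" "isMk c" unfolding mcnt_def
      by (metis (mono_tags, lifting) card_1_singletonE mem_Collect_eq singletonI)
    then obtain m where m: "{Mk m} \<in> ch V" by (auto simp: isMk_def)
    have allfree: "\<forall>c\<in>ch V. rho c = 0"
    proof
      fix c assume c: "c \<in> ch V"
      show "rho c = 0"
      proof (cases "isMk c")
        case True thus ?thesis by (simp add: rho_def)
      next
        case False
        have "freeI c" using d1[OF V m c False] by blast
        thus ?thesis using rho_item[OF ch_items[OF V c] False] by simp
      qed
    qed
    hence s0: "(\<Sum>c\<in>ch V. rho c) = 0" by simp
    have "rho V = 1"
    proof (cases "V = R")
      case True
      have "0 \<notin> F" using d2 m True by blast
      thus ?thesis using True notMkR by (simp add: rho_def)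
    next
      case False
      hence VE: "V \<in> Es" using V by (simp add: VS_def')
      have "has_mark C V" using m by (auto simp: has_mark_def)
      hence "\<not> freeI V" using free_rec[OF VE] by blast
      thus ?thesis using False Es_notMk[OF VE] by (simp add: rho_def)
    qed
    thus ?thesis using s0 m1 by (simp add: Dv_def)
  next
    case m0: True
    have nomk: "\<forall>c\<in>ch V. \<not> isMk c"
    proof -
      have "{c\<in>ch V. isMk c} = {}" using m0 finch by (simp add: mcnt_def)
      thus ?thesis by blast
    qed
    have c2: "card (ch V) = 2" using chcard[OF V] cm_le_m[OF V] m0 by simp
    have sle: "(\<Sum>c\<in>ch V. rho c) \<le> 2"
    proof -
      have "(\<Sum>c\<in>ch V. rho c) \<le> (\<Sum>c\<in>ch V. 1)" by (rule sum_mono) (simp add: rho_le)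
      thus ?thesis using c2 by simp
    qed
    have r0: "rho V \<ge> 0" by (rule rho_le)
    show ?thesis
    proof (cases "\<exists>c1\<in>ch V. rho c1 = 0")
      case True
      then obtain c1 where c1: "c1 \<in> ch V" "rho c1 = 0" by blast
      have "(\<Sum>c\<in>ch V. rho c) = rho c1 + (\<Sum>c\<in>ch V - {c1}. rho c)" using finch c1(1) by (simp add: sum.remove)
      also have "(\<Sum>c\<in>ch V - {c1}. rho c) \<le> (\<Sum>c\<in>ch V - {c1}. 1)" by (rule sum_mono) (simp add: rho_le)
      also have "(\<Sum>c\<in>ch V - {c1}. (1::int)) = 1" using c2 c1(1) finch by simp
      finally have "(\<Sum>c\<in>ch V. rho c) \<le> 1" using c1 by simp
      thus ?thesis using r0 m0 by (simp add: Dv_def)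
    next
      case False
      hence all1: "\<forall>c\<in>ch V. rho c = 1" using rho01 by blast
      hence s2: "(\<Sum>c\<in>ch V. rho c) = 2" using c2 by simp
      have nf: "\<forall>c\<in>ch V. \<not> freeI c"
      proof
        fix c assume c: "c \<in> ch V"
        show "\<not> freeI c" using all1 c rho_item[OF ch_items[OF V c]] nomk by fastforce
      qed
      have "rho V = 1"
      proof (cases "V = R")
        case True
        have "0 \<notin> F" using d3 nomk nf True by blast
        thus ?thesis using True notMkR by (simp add: rho_def)
      next
        case False
        hence VE: "V \<in> Es" using V by (simp add: VS_def')
        have "\<not> freeI V" using free_rec[OF VE] nf by blast
        thus ?thesis using False Es_notMk[OF VE] by (simp add: rho_def)
      qed
      thus ?thesis using s2 m0 by (simp add: Dv_def)
    qed
  qed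
qed

lemma Dv0: "V \<in> VS \<Longrightarrow> Dv V = 0"
proof -
  assume V: "V \<in> VS"
  have "(\<Sum>V\<in>VS. ex V) = 0" using ex_zero by simp
  hence "int (card Es) + 2 = int (2 * (r + s) + card F)" using sum_ex by simp
  hence "(\<Sum>V\<in>VS. Dv V) = 0" using sum_Dv by simp
  thus ?thesis using sum_nonneg_eq_0_iff[OF finVS] Dv_nonneg V by blast
qed

lemma orient: "\<exists>C'. is_rbroccoli r s D F C' \<and> ((\<lambda>A. \<bar>fst C' A\<bar>), snd C') = C"
proof -
  interpret g: good r s D C F
    by unfold_locales (auto intro: desc noTwo Dv0 simp: noContr chcard)
  show ?thesis using g.Cp_rB g.abs_Cp by blast
qed
end


definition absC :: "curve \<Rightarrow> curve" where "absC C = ((\<lambda>A. \<bar>fst C A\<bar>), snd C)"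

lemma edges_abs: "edgesS (absC C) = edgesS C" by (simp add: edgesS_def absC_def)
lemma fst_absC: "fst (absC C) A = \<bar>fst C A\<bar>" by (simp add: absC_def)
lemma fst_absC_aux: "\<bar>fst (absC C) A\<bar> = \<bar>fst C A\<bar>" by (simp add: absC_def)
lemma snd_absC: "snd (absC C) = snd C" by (simp add: absC_def)

lemma pos_abs: "pos D (absC C) l = pos D C l"
  by (simp add: pos_def edges_abs fst_absC_aux snd_absC)
lemma ev_abs: "ev r s D F (absC C) = ev r s D F C"
  unfolding ev_def pos_abs ..


locale rbl = cur +
  fixes F :: "nat set"
  assumes rB: "is_rbroccoli r s D F C"
begin

lemma types: "V \<in> VS \<Longrightarrow> typeI r s D F C V \<or> typeII r s D F C V \<or> typeIII r s D F C V"
  using rB by (simp add: is_rbroccoli_def)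

lemma ea_fin: "V \<in> VS \<Longrightarrow> finite (edges_at C V)" using ch_fin by (simp add: edges_at_def)
lemma ch_ea: "c \<in> ch V \<Longrightarrow> c \<in> edges_at C V" by (simp add: edges_at_def)

lemma two_contr: assumes V: "V \<in> VS" and a: "a \<in> edges_at C V" "sigma D a = (0,0)"
   and b: "b \<in> edges_at C V" "sigma D b = (0,0)" and ab: "a \<noteq> b"
  shows "card (noncontr_at D C V) + 2 \<le> card (edges_at C V)"
proof -
  have "noncontr_at D C V \<subseteq> edges_at C V - {a, b}" using a b by (auto simp: noncontr_at_def)
  hence "card (noncontr_at D C V) \<le> card (edges_at C V - {a, b})" using ea_fin[OF V] by (intro card_mono) auto
  also have "\<dots> = card (edges_at C V) - card {a, b}" using a(1) b(1) ea_fin[OF V] by (intro card_Diff_subset) auto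
  also have "card {a, b} = 2" using ab by simp
  finally have *: "card (noncontr_at D C V) \<le> card (edges_at C V) - 2" .
  have "card {a, b} \<le> card (edges_at C V)" using a(1) b(1) ea_fin[OF V] by (intro card_mono) auto
  hence "2 \<le> card (edges_at C V)" using ab by simp
  thus ?thesis using * by linarith
qed

lemma desc_abs: "is_desc r s D (absC C)"
proof -
  have ee: "edgesS (absC C) = Es" by (rule edges_abs)
  have "is_curve r s D (absC C)" using cd curve_data_cong[OF ee] by (simp add: is_curve_def absC_def)
  moreover have "\<forall>i<r. \<forall>V\<in>verts r s n (absC C). {Mk i} \<in> children (absC C) V \<longrightarrow> card (edges_at (absC C) V) = 3"
  proof (intro allI impI ballI)
    fix i V assume i: "i < r" and V: "V \<in> verts r s n (absC C)" and c: "{Mk i} \<in> children (absC C) V"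
    have V': "V \<in> VS" using V verts_cong[OF ee] by simp
    have c': "{Mk i} \<in> ch V" using c children_cong[OF ee] by simp
    have "typeI r s D F C V"
    proof -
      have "\<not> typeII r s D F C V" using c' by (auto simp: typeII_def has_mark_def)
      moreover have "\<not> typeIII r s D F C V"
      proof
        assume t: "typeIII r s D F C V"
        then obtain j where j: "r \<le> j" "{Mk j} \<in> ch V" by (auto simp: typeIII_def has_cplx_mark_def)
        have "{Mk i} \<noteq> {Mk j}" using i j by auto
        from two_contr[OF V' ch_ea[OF c'] sigma_Mk ch_ea[OF j(2)] sigma_Mk this] t show False by (simp add: typeIII_def)
      qed
      ultimately show ?thesis using types[OF V'] by blast
    qed
    thus "card (edges_at (absC C) V) = 3" using edges_at_cong[OF ee] by (simp add: typeI_def)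
  qed
  moreover have "\<forall>i. r \<le> i \<and> i < r + s \<longrightarrow> (\<forall>V\<in>verts r s n (absC C). {Mk i} \<in> children (absC C) V \<longrightarrow> card (edges_at (absC C) V) = 4)"
  proof (intro allI impI ballI)
    fix i V assume i: "r \<le> i \<and> i < r + s" and V: "V \<in> verts r s n (absC C)" and c: "{Mk i} \<in> children (absC C) V"
    have V': "V \<in> VS" using V verts_cong[OF ee] by simp
    have c': "{Mk i} \<in> ch V" using c children_cong[OF ee] by simp
    have "typeIII r s D F C V"
    proof -
      have "\<not> typeII r s D F C V" using c' by (auto simp: typeII_def has_mark_def)
      moreover have "\<not> typeI r s D F C V"
      proof
        assume t: "typeI r s D F C V"
        then obtain j where j: "j < r" "{Mk j} \<in> ch V" by (auto simp: typeI_def has_real_mark_def)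
        have "{Mk i} \<noteq> {Mk j}" using i j by auto
        from two_contr[OF V' ch_ea[OF c'] sigma_Mk ch_ea[OF j(2)] sigma_Mk this] t show False by (simp add: typeI_def)
      qed
      ultimately show ?thesis using types[OF V'] by blast
    qed
    thus "card (edges_at (absC C) V) = 4" using edges_at_cong[OF ee] by (simp add: typeIII_def)
  qed
  ultimately show ?thesis by (simp add: is_desc_def)
qed

lemma mult_eq: "mC_or r s D F y C = mC_un r s D F y (absC C)"
proof -
  have ee: "edgesS (absC C) = Es" by (rule edges_abs)
  have "mV_or r s D F y C V = mV_un r s D y (absC C) V" if V: "V \<in> VS" for V
  proof -
    have ea: "edges_at (absC C) V = edges_at C V" using edges_at_cong[OF ee] by simp
    have mk: "has_real_mark r (absC C) V = has_real_mark r C V" "has_cplx_mark r s (absC C) V = has_cplx_mark r s C V"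
      "has_mark (absC C) V = has_mark C V" using marks_cong[OF ee] by auto
    have mi: "mik D (absC C) V = mik D C V" using mik_cong[OF ee] by simp
    have hr: "has_real_mark r C V \<Longrightarrow> has_mark C V" by (auto simp: has_real_mark_def has_mark_def)
    consider "typeI r s D F C V" | "\<not> typeI r s D F C V" "typeII r s D F C V"
      | "\<not> typeI r s D F C V" "\<not> typeII r s D F C V" "typeIII r s D F C V" using types[OF V] by blast
    thus ?thesis
    proof cases
      case 1 thus ?thesis by (simp add: mV_or_def mV_un_def typeI_def ea mk)
    next
      case 2 thus ?thesis using hr by (auto simp: mV_or_def mV_un_def typeII_def ea mk mi)
    next
      case 3 thus ?thesis by (simp add: mV_or_def mV_un_def typeIII_def ea mk mi)
    qed
  qed
  moreover have "verts r s n (absC C) = VS" by (rule verts_cong[OF ee])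
  ultimately show ?thesis unfolding mC_or_def mC_un_def by (metis (no_types, lifting) prod.cong)
qed

end


context rbl begin

lemma V_nc: assumes V: "V \<in> VS" shows "V \<in> noncontr_at D C V"
proof (rule ccontr)
  assume nc: "V \<notin> noncontr_at D C V"
  have Vea: "V \<in> edges_at C V" by (simp add: edges_at_def)
  hence sV: "sigma D V = (0,0)" using nc by (simp add: noncontr_at_def)
  have Vnot: "V \<notin> ch V" using ch_psub by blast
  consider "typeI r s D F C V" | "typeII r s D F C V" | "typeIII r s D F C V" using types[OF V] by blast
  thus False
  proof cases
    case 1
    then obtain j where j: "{Mk j} \<in> ch V" by (auto simp: typeI_def has_real_mark_def)
    have "{Mk j} \<noteq> V" using j Vnot by blast
    from two_contr[OF V ch_ea[OF j] sigma_Mk Vea sV this] 1 show False by (simp add: typeI_def)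
  next
    case 2
    have "noncontr_at D C V \<subseteq> edges_at C V" by (auto simp: noncontr_at_def)
    moreover have "card (noncontr_at D C V) = card (edges_at C V)" using 2 by (simp add: typeII_def)
    ultimately have "noncontr_at D C V = edges_at C V" using card_subset_eq ea_fin[OF V] by blast
    thus False using nc Vea by simp
  next
    case 3
    then obtain j where j: "{Mk j} \<in> ch V" by (auto simp: typeIII_def has_cplx_mark_def)
    have "{Mk j} \<noteq> V" using j Vnot by blast
    from two_contr[OF V ch_ea[OF j] sigma_Mk Vea sV this] 3 show False by (simp add: typeIII_def)
  qed
qed

end

locale inj2 = rbl +
  fixes C2 :: curve
  assumes rB2: "is_rbroccoli r s D F C2" and ab: "absC C2 = absC C"
begin

lemma ee: "edgesS C2 = Es" using ab edges_abs by metis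

lemma sgn_eq: "E \<in> Es \<Longrightarrow> (fst C E < 0) = (fst C2 E < 0)"
proof (induction "card E" arbitrary: E rule: less_induct)
  case less
  have E: "E \<in> Es" by fact
  have EV: "E \<in> VS" using E by (simp add: VS_def')
  have chC2: "children C2 = ch" by (rule children_cong[OF ee])
  have ncC2: "noncontr_at D C2 = noncontr_at D C" by (rule noncontr_cong[OF ee])
  have mkC2: "has_mark C2 = has_mark C" using marks_cong[OF ee] by simp
  have vC2: "verts r s n C2 = VS" by (rule verts_cong[OF ee])
  have Vnot: "E \<notin> ch E" using ch_psub by blast
  have upE: "up r s D F C' E = (fst C' E < 0)" for C'
    using Es_neR[OF E] Es_ne1[OF E] by (auto simp: up_def)
  have upc: "up r s D F C c = up r s D F C2 c" if c: "c \<in> ch E" for c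
  proof (cases "c \<in> Es")
    case True
    have "card c < card E" using ch_psub[OF c] Es_fin[OF E] by (simp add: psubset_card_mono)
    hence "(fst C c < 0) = (fst C2 c < 0)" using less.hyps True by blast
    moreover have "up r s D F C' c = (fst C' c < 0)" for C'
      using Es_neR[OF True] Es_ne1[OF True] by (auto simp: up_def)
    ultimately show ?thesis by simp
  next
    case False
    have c2: "c \<notin> edgesS C2" using False ee by simp
    have "fst C c = 0" "fst C2 c = 0" using False c2 by (auto simp: edgesS_def)
    thus ?thesis by (simp add: up_def)
  qed
  have outc: "outgoing r s D F C E c = outgoing r s D F C2 E c" if "c \<noteq> E" for c
    using upc that by (auto simp: outgoing_def chC2)
  have outE: "outgoing r s D F C' E E = (fst C' E < 0)" for C'
    using upE by (auto simp: outgoing_def children_def)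
  let ?NC = "noncontr_at D C E"
  have ENC: "E \<in> ?NC" by (rule V_nc[OF EV])
  have t2: "typeI r s D F C2 E \<or> typeII r s D F C2 E \<or> typeIII r s D F C2 E"
    using rB2 vC2 EV by (simp add: is_rbroccoli_def)
  show ?case
  proof (cases "has_mark C E")
    case True
    have "typeI r s D F C E \<or> typeIII r s D F C E" using types[OF EV] True by (auto simp: typeII_def)
    hence "\<forall>x\<in>?NC. outgoing r s D F C E x" by (auto simp: typeI_def typeIII_def)
    hence 1: "fst C E < 0" using ENC outE by blast
    have "typeI r s D F C2 E \<or> typeIII r s D F C2 E" using t2 True mkC2 by (auto simp: typeII_def)
    hence "\<forall>x\<in>?NC. outgoing r s D F C2 E x" using ncC2 by (auto simp: typeI_def typeIII_def)
    hence 2: "fst C2 E < 0" using ENC outE by blast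
    show ?thesis using 1 2 by simp
  next
    case False
    have T1: "typeII r s D F C E" using types[OF EV] False by (auto simp: typeI_def typeIII_def has_mark_def has_real_mark_def has_cplx_mark_def)
    have T2: "typeII r s D F C2 E" using t2 False mkC2 by (auto simp: typeI_def typeIII_def has_mark_def has_real_mark_def has_cplx_mark_def chC2)
    let ?O = "{x\<in>?NC - {E}. outgoing r s D F C E x}"
    have finO: "finite ?O" using ea_fin[OF EV] by (auto simp: noncontr_at_def)
    have EO: "E \<notin> ?O" by simp
    have O1: "{x\<in>?NC. outgoing r s D F C E x} = (if fst C E < 0 then insert E ?O else ?O)"
      using ENC outE[of C] by auto
    have O2: "{x\<in>?NC. outgoing r s D F C2 E x} = (if fst C2 E < 0 then insert E ?O else ?O)"
    proof (rule set_eqI)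
      fix x show "x \<in> {x\<in>?NC. outgoing r s D F C2 E x} \<longleftrightarrow> x \<in> (if fst C2 E < 0 then insert E ?O else ?O)"
        using ENC outE[of C2] outc[of x] by (cases "x = E") auto
    qed
    have c1: "card {x\<in>?NC. outgoing r s D F C E x} = 1" using T1 by (simp add: typeII_def)
    have c2: "card {x\<in>?NC. outgoing r s D F C2 E x} = 1" using T2 ncC2 by (simp add: typeII_def)
    show ?thesis
    proof (rule ccontr)
      assume ne: "(fst C E < 0) \<noteq> (fst C2 E < 0)"
      have "card (insert E ?O) = card ?O + 1" using finO EO by simp
      thus False using ne O1 O2 c1 c2 by (cases "fst C E < 0") auto
    qed
  qed
qed

lemma eq: "C2 = C"
proof -
  have "fst C2 A = fst C A" for A
  proof (cases "A \<in> Es")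
    case True
    have a: "\<bar>fst C2 A\<bar> = \<bar>fst C A\<bar>" using arg_cong[OF ab, of "\<lambda>X. fst X A"] by (simp add: fst_absC)
    have "fst C A \<noteq> 0" using True by (simp add: edgesS_def)
    hence "fst C2 A \<noteq> 0" using a by auto
    thus ?thesis using a sgn_eq[OF True] `fst C A \<noteq> 0` by (cases "fst C A < 0"; cases "fst C2 A < 0") auto
  next
    case False
    hence "A \<notin> edgesS C2" using ee by simp
    thus ?thesis using False by (simp add: edgesS_def)
  qed
  moreover have "snd C2 = snd C" using arg_cong[OF ab, of snd] by (simp add: snd_absC)
  ultimately show ?thesis by (simp add: prod_eq_iff fun_eq_iff)
qed

end


theorem corollary3p23:
  fixes r s :: nat and D :: "(int \<times> int) list" and F :: "nat set"
    and P :: "evidx \<Rightarrow> real" and y :: real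
  assumes "F \<subseteq> {..<length D}"
    and "r + 2 * s + card F + 1 = length D"
    and "gen_pos r s D F (M_desc_closure r s D) P"
    and "gen_pos r s D F (M_rB r s D F) P"
    and "y > 0" and "y \<noteq> 1"
  shows "N_desc r s y D F P = N_rB r s y D F P"
proof -
  note Fsub = assms(1) and dim = assms(2) and gp = assms(3)
  have npos: "1 \<le> length D" using dim by simp
  let ?RB = "{C. is_rbroccoli r s D F C \<and> ev r s D F C = P}"
  let ?DS = "{C. is_desc r s D C \<and> ev r s D F C = P}"
  have inj: "inj_on absC ?RB"
  proof (rule inj_onI)
    fix C1 C2 assume C1: "C1 \<in> ?RB" and C2: "C2 \<in> ?RB" and ab: "absC C1 = absC C2"
    have cd1: "is_curve_data r s D C1" using C1 by (simp add: is_rbroccoli_def is_or_curve_def)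
    interpret i2: inj2 r s D C1 F C2
      by unfold_locales (use cd1 npos C1 C2 ab in auto)
    show "C1 = C2" using i2.eq by simp
  qed
  have img1: "absC ` ?RB \<subseteq> ?DS"
  proof
    fix X assume "X \<in> absC ` ?RB"
    then obtain C where C: "C \<in> ?RB" "X = absC C" by blast
    have cd1: "is_curve_data r s D C" using C by (simp add: is_rbroccoli_def is_or_curve_def)
    interpret rb: rbl r s D C F by unfold_locales (use cd1 npos C in auto)
    show "X \<in> ?DS" using rb.desc_abs C ev_abs by simp
  qed
  have img2: "?DS \<subseteq> absC ` ?RB"
  proof
    fix C assume C: "C \<in> ?DS"
    have cdC: "is_curve_data r s D C" using C by (simp add: is_desc_def is_curve_def)
    interpret c: curF r s D C F by unfold_locales (use cdC npos Fsub in auto)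
    have NS: "2 * (r + s) + card F \<le> card S" if "finite S" "gA r s D F ` edgesS C \<union> {e1 r s D F, e2 r s D F} \<subseteq> fv.span S" for S
    proof (rule ccontr)
      assume "\<not> 2 * (r + s) + card F \<le> card S"
      hence "card S < 2 * (r + s) + card F" by simp
      thus False using no_small[of r s D C F P S] C gp c.finEs that by simp
    qed
    interpret n: ns r s D C F by unfold_locales (use C dim NS in auto)
    obtain C' where C': "is_rbroccoli r s D F C'" "((\<lambda>A. \<bar>fst C' A\<bar>), snd C') = C" using n.orient by blast
    have "absC C' = C" using C'(2) by (simp add: absC_def)
    moreover have "ev r s D F C' = P" using C ev_abs[of r s D F C'] `absC C' = C` by simp
    ultimately show "C \<in> absC ` ?RB" using C'(1) by blast
  qed
  have bij: "bij_betw absC ?RB ?DS" unfolding bij_betw_def using inj img1 img2 by blast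
  have mult: "mC_or r s D F y C = mC_un r s D F y (absC C)" if "C \<in> ?RB" for C
  proof -
    have cd1: "is_curve_data r s D C" using that by (simp add: is_rbroccoli_def is_or_curve_def)
    interpret rb: rbl r s D C F by unfold_locales (use cd1 npos that in auto)
    show ?thesis by (rule rb.mult_eq)
  qed
  have "(\<Sum>C\<in>?RB. mC_or r s D F y C) = (\<Sum>C\<in>?RB. mC_un r s D F y (absC C))"
    using mult by (rule sum.cong[OF refl])
  also have "\<dots> = (\<Sum>C\<in>?DS. mC_un r s D F y C)" by (rule sum.reindex_bij_betw[OF bij])
  finally show ?thesis unfolding N_desc_def N_rB_def by simp
qed

end
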